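(* (Haag duality.) The commutant of $\widetilde{\mathcal A}_r$ within the full gauge-invariant algebra $\widetilde{\mathcal A}=\Pi_{GI}\mathcal B(\mathcal H)\Pi_{GI}$ is $\widetilde{\mathcal A}_{\bar r}$: $$\{X\in\widetilde{\mathcal A}:XY=YX\ \ \forall Y\in\widetilde{\mathcal A}_r\}=\widetilde{\mathcal A}_{\bar r}.$$
   Context: Setup. Let $G$ be a compact Lie group (possibly finite) with normalized Haar measure $dg$ ($\int dg=1$). Let $\Lambda=(V,E)$ be a finite directed graph; loops and multiple edges are allowed. Each edge $e$ carries $\mathcal H_e=L^2(G)$ with unitaries $L_e(g)|h\rangle=|gh\rangle$ and $R_e(g^{-1})|h\rangle=|hg^{-1}\rangle$. Each vertex $v$ carries a Hilbert space $\mathcal H_v$ with a unitary representation $U_v$ of $G$. All these spaces are taken finite-dimensional by truncating to finitely many irreducible isotypic sectors, invariant under the group actions. The pre-gauged space is $\mathcal H=\bigotimes_v\mathcal H_v\otimes\bigotimes_e\mathcal H_e$. The gauge transformation at $v$ is $A_v(g)=U_v(g)\prod_{e\in E^-(v)}L_e(g)\prod_{e\in E^+(v)}R_e(g^{-1})$, where $E^-(v)$ is the set of edges oriented out of $v$ and $E^+(v)$ the set of edges oriented into $v$. Set $\Pi_v=\int dg\,A_v(g)$ and $\Pi_{GI}=\prod_v\Pi_v$. A subregion $r$ is an arbitrary subset of $V\cup E$, and $\bar r$ is its complement. Let $\mathcal H_r=\bigotimes_{x\in r}\mathcal H_x$, $\mathcal A_r=\mathcal B(\mathcal H_r)\otimes1_{\bar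 r}$ and $\mathcal A_{\bar r}=1_r\otimes\mathcal B(\mathcal H_{\bar r})$. Define $\widetilde{\mathcal A}_r=\Pi_{GI}\mathcal A_r\Pi_{GI}$ and $\widetilde{\mathcal A}_{\bar r}=\Pi_{GI}\mathcal A_{\bar r}\Pi_{GI}$. All of these are viewed as algebras of operators on $\widetilde{\mathcal H}=\Pi_{GI}\mathcal H$. *)

theory Defs
  imports "HOL-Analysis.Analysis" "HOL-Probability.Probability"
begin

text \<open>The compact group G is a type 'g of class topological_group_add,
written additively (g + h is the group product, - g the inverse, 0 the unit; group_add is
NOT assumed commutative). Hilbert spaces are finite dimensional and realised in
coordinates: a site x carries the space with orthonormal basis indexed by {..< D x};
the tensor product over the sites S has basis the configurations (confs S D).
Operators on it are complex matrices indexed by configurations, represented as functions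
that vanish outside confs x confs.\<close>

type_synonym 'x cfg = "'x \<Rightarrow> nat"
type_synonym 'x op = "'x cfg \<Rightarrow> 'x cfg \<Rightarrow> complex"

definition confs :: "'x set \<Rightarrow> ('x \<Rightarrow> nat) \<Rightarrow> 'x cfg set" where
  "confs S D = PiE S (\<lambda>x. {..< D x})"

definition opmul :: "'x set \<Rightarrow> ('x \<Rightarrow> nat) \<Rightarrow> 'x op \<Rightarrow> 'x op \<Rightarrow> 'x op" where
  "opmul S D A B = (\<lambda>c c''. if c \<in> confs S D \<and> c'' \<in> confs S D
      then (\<Sum>c'\<in>confs S D. A c c' * B c' c'') else 0)"

definition tensor :: "'x set \<Rightarrow> ('x \<Rightarrow> nat) \<Rightarrow> ('x \<Rightarrow> nat \<Rightarrow> nat \<Rightarrow> complex) \<Rightarrow> 'x op" where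
  "tensor S D Op = (\<lambda>c c'. if c \<in> confs S D \<and> c' \<in> confs S D
      then (\<Prod>x\<in>S. Op x (c x) (c' x)) else 0)"

definition kdelta :: "nat \<Rightarrow> nat \<Rightarrow> complex" where
  "kdelta i j = (if i = j then 1 else 0)"

definition opid :: "'x set \<Rightarrow> ('x \<Rightarrow> nat) \<Rightarrow> 'x op" where
  "opid S D = tensor S D (\<lambda>_. kdelta)"

definition full_alg :: "'x set \<Rightarrow> ('x \<Rightarrow> nat) \<Rightarrow> 'x op set" where
  "full_alg S D = {X. \<forall>c c'. \<not> (c \<in> confs S D \<and> c' \<in> confs S D) \<longrightarrow> X c c' = 0}"

text \<open>The local algebra A_r = B(H_r) \<otimes> 1_{rbar}, for r \<subseteq> S.\<close>
definition local_alg :: "'x set \<Rightarrow> ('x \<Rightarrow> nat) \<Rightarrow> 'x set \<Rightarrow> 'x op set" where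
  "local_alg S D r = {(\<lambda>c c'. if c \<in> confs S D \<and> c' \<in> confs S D
       then B (restrict c r) (restrict c' r) *
            (if restrict c (S - r) = restrict c' (S - r) then 1 else 0)
       else 0) | B :: 'x op. True}"

text \<open>Matrix of the unitary L(g) (f \<mapsto> f(g^{-1} \<cdot>)) and of R(g^{-1}) (f \<mapsto> f(\<cdot> g))
  in the orthonormal family f 0, ..., f (n-1) of L^2(G, mu).\<close>
definition Lmat :: "'g::group_add measure \<Rightarrow> (nat \<Rightarrow> 'g \<Rightarrow> complex) \<Rightarrow> 'g \<Rightarrow> nat \<Rightarrow> nat \<Rightarrow> complex" where
  "Lmat \<mu> f g i j = (LINT h|\<mu>. cnj (f i h) * f j (- g + h))"

definition Rinvmat :: "'g::group_add measure \<Rightarrow> (nat \<Rightarrow> 'g \<Rightarrow> complex) \<Rightarrow> 'g \<Rightarrow> nat \<Rightarrow> nat \<Rightarrow> complex" where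
  "Rinvmat \<mu> f g i j = (LINT h|\<mu>. cnj (f i h) * f j (h + g))"

definition sites :: "'v set \<Rightarrow> 'e set \<Rightarrow> ('v + 'e) set" where
  "sites V E = Inl ` V \<union> Inr ` E"

definition site_dim :: "('v \<Rightarrow> nat) \<Rightarrow> ('e \<Rightarrow> nat) \<Rightarrow> ('v + 'e) \<Rightarrow> nat" where
  "site_dim d n x = (case x of Inl v \<Rightarrow> d v | Inr e \<Rightarrow> n e)"

text \<open>Gauge transformation A_v(g) = U_v(g) \<Prod>_{src e = v} L_e(g) \<Prod>_{tgt e = v} R_e(g^{-1}).
  For a loop e at v both factors act on edge e.\<close>
definition gauge_op ::
  "'v set \<Rightarrow> 'e set \<Rightarrow> ('e \<Rightarrow> 'v) \<Rightarrow> ('e \<Rightarrow> 'v) \<Rightarrow> ('v \<Rightarrow> nat) \<Rightarrow> ('e \<Rightarrow> nat)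
   \<Rightarrow> 'g::group_add measure \<Rightarrow> ('v \<Rightarrow> 'g \<Rightarrow> nat \<Rightarrow> nat \<Rightarrow> complex)
   \<Rightarrow> ('e \<Rightarrow> nat \<Rightarrow> 'g \<Rightarrow> complex) \<Rightarrow> 'v \<Rightarrow> 'g \<Rightarrow> ('v + 'e) op" where
  "gauge_op V E src tgt d n \<mu> U \<phi> v g =
     tensor (sites V E) (site_dim d n)
       (\<lambda>x i j. case x of
           Inl w \<Rightarrow> (if w = v then U v g i j else kdelta i j)
         | Inr e \<Rightarrow> (\<Sum>k<n e. (if src e = v then Lmat \<mu> (\<phi> e) g i k else kdelta i k) *
                             (if tgt e = v then Rinvmat \<mu> (\<phi> e) g k j else kdelta k j)))"

definition gauge_proj ::
  "'v set \<Rightarrow> 'e set \<Rightarrow> ('e \<Rightarrow> 'v) \<Rightarrow> ('e \<Rightarrow> 'v) \<Rightarrow> ('v \<Rightarrow> nat) \<Rightarrow> ('e \<Rightarrow> nat)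
   \<Rightarrow> 'g::group_add measure \<Rightarrow> ('v \<Rightarrow> 'g \<Rightarrow> nat \<Rightarrow> nat \<Rightarrow> complex)
   \<Rightarrow> ('e \<Rightarrow> nat \<Rightarrow> 'g \<Rightarrow> complex) \<Rightarrow> 'v \<Rightarrow> ('v + 'e) op" where
  "gauge_proj V E src tgt d n \<mu> U \<phi> v =
     (\<lambda>c c'. LINT g|\<mu>. gauge_op V E src tgt d n \<mu> U \<phi> v g c c')"

text \<open>Pi_GI = \<Prod>_v Pi_v, the vertices being listed (without repetition) by Vs.\<close>
definition PiGI ::
  "'v list \<Rightarrow> 'e set \<Rightarrow> ('e \<Rightarrow> 'v) \<Rightarrow> ('e \<Rightarrow> 'v) \<Rightarrow> ('v \<Rightarrow> nat) \<Rightarrow> ('e \<Rightarrow> nat)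
   \<Rightarrow> 'g::group_add measure \<Rightarrow> ('v \<Rightarrow> 'g \<Rightarrow> nat \<Rightarrow> nat \<Rightarrow> complex)
   \<Rightarrow> ('e \<Rightarrow> nat \<Rightarrow> 'g \<Rightarrow> complex) \<Rightarrow> ('v + 'e) op" where
  "PiGI Vs E src tgt d n \<mu> U \<phi> =
     foldr (opmul (sites (set Vs) E) (site_dim d n))
       (map (gauge_proj (set Vs) E src tgt d n \<mu> U \<phi>) Vs)
       (opid (sites (set Vs) E) (site_dim d n))"

definition compress :: "'x set \<Rightarrow> ('x \<Rightarrow> nat) \<Rightarrow> 'x op \<Rightarrow> 'x op set \<Rightarrow> 'x op set" where
  "compress S D P A = (\<lambda>X. opmul S D (opmul S D P X) P) ` A"

definition haar_measure :: "'g::{topological_group_add} measure \<Rightarrow> bool" where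
  "haar_measure \<mu> \<longleftrightarrow> sets \<mu> = sets borel \<and> prob_space \<mu> \<and>
     (\<forall>g. distr \<mu> \<mu> (\<lambda>h. g + h) = \<mu>) \<and> (\<forall>g. distr \<mu> \<mu> (\<lambda>h. h + g) = \<mu>)"

definition unitary_rep :: "nat \<Rightarrow> ('g::topological_group_add \<Rightarrow> nat \<Rightarrow> nat \<Rightarrow> complex) \<Rightarrow> bool" where
  "unitary_rep m U \<longleftrightarrow>
     (\<forall>g h i j. i < m \<and> j < m \<longrightarrow> U (g + h) i j = (\<Sum>k<m. U g i k * U h k j)) \<and>
     (\<forall>g i j. i < m \<and> j < m \<longrightarrow> (\<Sum>k<m. cnj (U g k i) * U g k j) = kdelta i j) \<and>
     (\<forall>i j. i < m \<and> j < m \<longrightarrow> continuous_on UNIV (\<lambda>g. U g i j))"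

text \<open>f 0, ..., f (m-1) is an orthonormal basis of a finite-dimensional subspace of
  L^2(G, mu) invariant under left and right translations (i.e. a truncation of L^2(G)
  to finitely many isotypic sectors).\<close>
definition L2_trunc_basis :: "'g::topological_group_add measure \<Rightarrow> nat \<Rightarrow> (nat \<Rightarrow> 'g \<Rightarrow> complex) \<Rightarrow> bool" where
  "L2_trunc_basis \<mu> m f \<longleftrightarrow>
     (\<forall>i<m. f i \<in> borel_measurable \<mu> \<and> integrable \<mu> (\<lambda>h. (cmod (f i h))\<^sup>2)) \<and>
     (\<forall>i<m. \<forall>j<m. (LINT h|\<mu>. cnj (f i h) * f j h) = kdelta i j) \<and>
     (\<forall>g. \<forall>j<m. \<exists>a. AE h in \<mu>. f j (- g + h) = (\<Sum>i<m. a i * f i h)) \<and>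
     (\<forall>g. \<forall>j<m. \<exists>a. AE h in \<mu>. f j (h + g) = (\<Sum>i<m. a i * f i h))"

end

theory Submission
  imports Defs "HOL-Library.Function_Algebras"
begin


type_synonym 'c mat = "'c \<Rightarrow> 'c \<Rightarrow> complex"

definition mm :: "'c set \<Rightarrow> 'c mat \<Rightarrow> 'c mat \<Rightarrow> 'c mat" where
 "mm C A B = (\<lambda>c c''. if c \<in> C \<and> c'' \<in> C then (\<Sum>c'\<in>C. A c c' * B c' c'') else 0)"

definition zo :: "'c set \<Rightarrow> 'c mat \<Rightarrow> bool" where
 "zo C X \<longleftrightarrow> (\<forall>c c'. \<not>(c \<in> C \<and> c' \<in> C) \<longrightarrow> X c c' = 0)"

definition idm :: "'c set \<Rightarrow> 'c mat" where
 "idm C = (\<lambda>c c'. if c \<in> C \<and> c' \<in> C \<and> c = c' then 1 else 0)"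

definition adj :: "'c mat \<Rightarrow> 'c mat" where "adj X = (\<lambda>c c'. cnj (X c' c))"

definition smul :: "complex \<Rightarrow> 'c mat \<Rightarrow> 'c mat" where "smul a X = (\<lambda>c c'. a * X c c')"

lemma opmul_mm: "opmul S D = mm (confs S D)"
  by (simp add: opmul_def mm_def fun_eq_iff)

lemma sum_fun_app: "(\<Sum>i\<in>I. A i) x = (\<Sum>i\<in>I. A i x)"
  by (induction I rule: infinite_finite_induct) auto

lemma mm_apply: "c \<in> C \<Longrightarrow> c'' \<in> C \<Longrightarrow> mm C A B c c'' = (\<Sum>c'\<in>C. A c c' * B c' c'')"
  by (simp add: mm_def)

lemma mm_out: "\<not>(c \<in> C \<and> c'' \<in> C) \<Longrightarrow> mm C A B c c'' = 0"
  by (auto simp: mm_def)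

lemma zoD: "zo C X \<Longrightarrow> \<not>(c \<in> C \<and> c' \<in> C) \<Longrightarrow> X c c' = 0"
  by (simp add: zo_def)

lemma zo_mm[simp]: "zo C (mm C A B)"
  by (simp add: zo_def mm_def)

lemma zo_idm[simp]: "zo C (idm C)"
  by (simp add: zo_def idm_def)

lemma zo_adj: "zo C X \<Longrightarrow> zo C (adj X)"
  by (auto simp: zo_def adj_def)

lemma zo_add: "zo C X \<Longrightarrow> zo C Y \<Longrightarrow> zo C (X + Y)"
  by (auto simp: zo_def)

lemma zo_diff: "zo C X \<Longrightarrow> zo C Y \<Longrightarrow> zo C (X - Y)"
  by (auto simp: zo_def)

lemma zo_smul: "zo C X \<Longrightarrow> zo C (smul a X)"
  by (auto simp: zo_def smul_def)

lemma zo_zero[simp]: "zo C 0"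
  by (auto simp: zo_def)

lemma zo_sum: "(\<And>i. i \<in> I \<Longrightarrow> zo C (A i)) \<Longrightarrow> zo C (\<Sum>i\<in>I. A i)"
  by (induction I rule: infinite_finite_induct) (auto intro: zo_add)

lemma mm_assoc: "finite C \<Longrightarrow> mm C (mm C A B) X = mm C A (mm C B X)"
  by (auto simp: mm_def fun_eq_iff sum_distrib_left sum_distrib_right mult.assoc intro: sum.swap)

lemma mm_idm_left: "zo C X \<Longrightarrow> finite C \<Longrightarrow> mm C (idm C) X = X"
proof -
  assume z: "zo C X" and f: "finite C"
  { fix c e assume ce: "c \<in> C" "e \<in> C"
    have "(\<Sum>c'\<in>C. idm C c c' * X c' e) = (\<Sum>c'\<in>C. if c = c' then X c' e else 0)"
      using ce by (intro sum.cong) (auto simp: idm_def)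
    also have "\<dots> = X c e" using ce f by simp
    finally have "(\<Sum>c'\<in>C. idm C c c' * X c' e) = X c e" . }
  then show ?thesis using z by (auto simp: mm_def fun_eq_iff zo_def)
qed

lemma mm_idm_right: "zo C X \<Longrightarrow> finite C \<Longrightarrow> mm C X (idm C) = X"
proof -
  assume z: "zo C X" and f: "finite C"
  { fix c e assume ce: "c \<in> C" "e \<in> C"
    have "(\<Sum>c'\<in>C. X c c' * idm C c' e) = (\<Sum>c'\<in>C. if c' = e then X c c' else 0)"
      using ce by (intro sum.cong) (auto simp: idm_def)
    also have "\<dots> = X c e" using ce f by simp
    finally have "(\<Sum>c'\<in>C. X c c' * idm C c' e) = X c e" . }
  then show ?thesis using z by (auto simp: mm_def fun_eq_iff zo_def)
qed

lemma adj_adj[simp]: "adj (adj X) = X"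
  by (simp add: adj_def)

lemma adj_mm: "adj (mm C A B) = mm C (adj B) (adj A)"
  by (auto simp: adj_def mm_def fun_eq_iff mult.commute)

lemma adj_idm[simp]: "adj (idm C) = idm C"
  by (auto simp: adj_def idm_def fun_eq_iff)

lemma mm_add_left: "mm C (A + B) X = mm C A X + mm C B X"
  by (auto simp: mm_def fun_eq_iff distrib_right sum.distrib)

lemma mm_add_right: "mm C X (A + B) = mm C X A + mm C X B"
  by (auto simp: mm_def fun_eq_iff distrib_left sum.distrib)

lemma mm_diff_left: "mm C (A - B) X = mm C A X - mm C B X"
  by (auto simp: mm_def fun_eq_iff left_diff_distrib sum_subtractf)

lemma mm_diff_right: "mm C X (A - B) = mm C X A - mm C X B"
  by (auto simp: mm_def fun_eq_iff right_diff_distrib sum_subtractf)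

lemma mm_zero_left[simp]: "mm C 0 X = 0"
  by (auto simp: mm_def fun_eq_iff)

lemma mm_zero_right[simp]: "mm C X 0 = 0"
  by (auto simp: mm_def fun_eq_iff)

lemma mm_sum_left: "mm C (\<Sum>i\<in>I. A i) X = (\<Sum>i\<in>I. mm C (A i) X)"
proof -
  { fix c e
    have "mm C (\<Sum>i\<in>I. A i) X c e = (\<Sum>i\<in>I. mm C (A i) X c e)"
      by (cases "c \<in> C \<and> e \<in> C") (auto simp: mm_def sum_fun_app sum_distrib_right intro: sum.swap) }
  then show ?thesis by (simp add: fun_eq_iff sum_fun_app)
qed

lemma mm_sum_right: "mm C X (\<Sum>i\<in>I. A i) = (\<Sum>i\<in>I. mm C X (A i))"
proof -
  { fix c e
    have "mm C X (\<Sum>i\<in>I. A i) c e = (\<Sum>i\<in>I. mm C X (A i) c e)"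
      by (cases "c \<in> C \<and> e \<in> C") (auto simp: mm_def sum_fun_app sum_distrib_left intro: sum.swap) }
  then show ?thesis by (simp add: fun_eq_iff sum_fun_app)
qed

lemma mm_smul_left: "mm C (smul a A) X = smul a (mm C A X)"
  by (auto simp: mm_def smul_def fun_eq_iff sum_distrib_left mult.assoc)

lemma mm_smul_right: "mm C X (smul a A) = smul a (mm C X A)"
  by (auto simp: mm_def smul_def fun_eq_iff sum_distrib_left mult.assoc mult.left_commute)

lemma smul_add: "smul a (X + Y) = smul a X + smul a Y"
  by (auto simp: smul_def fun_eq_iff distrib_left)

lemma smul_sum: "smul a (\<Sum>i\<in>I. A i) = (\<Sum>i\<in>I. smul a (A i))"
  by (simp add: smul_def fun_eq_iff sum_fun_app sum_distrib_left)

lemma smul_smul: "smul a (smul b X) = smul (a*b) X"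
  by (auto simp: smul_def mult.assoc)

lemma smul_one[simp]: "smul 1 X = X"
  by (auto simp: smul_def)


fun mpow :: "'c set \<Rightarrow> 'c mat \<Rightarrow> nat \<Rightarrow> 'c mat" where
  "mpow C Q 0 = idm C"
| "mpow C Q (Suc k) = mm C Q (mpow C Q k)"

lemma zo_mpow[simp]: "zo C (mpow C Q k)"
  by (cases k) auto

lemma mpow_add: "finite C \<Longrightarrow> mpow C Q (i + j) = mm C (mpow C Q i) (mpow C Q j)"
  by (induction i) (auto simp: mm_idm_left mm_assoc)

definition unitC :: "'c \<Rightarrow> 'c \<Rightarrow> 'c mat" where
  "unitC c d = (\<lambda>i j. if i = c \<and> j = d then 1 else 0)"

interpretation mv: vector_space "smul :: complex \<Rightarrow> 'c mat \<Rightarrow> 'c mat"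
  by unfold_locales (auto simp: smul_def fun_eq_iff algebra_simps)

lemma zo_expand:
  assumes "finite C" "zo C X"
  shows "X = (\<Sum>cd\<in>C \<times> C. smul (X (fst cd) (snd cd)) (unitC (fst cd) (snd cd)))"
proof -
  { fix i j
    have "(\<Sum>cd\<in>C \<times> C. smul (X (fst cd) (snd cd)) (unitC (fst cd) (snd cd))) i j
        = (\<Sum>cd\<in>C \<times> C. if (i,j) = cd then X i j else 0)"
      unfolding sum_fun_app by (intro sum.cong refl) (auto simp: smul_def unitC_def)
    also have "\<dots> = (if (i,j) \<in> C \<times> C then X i j else 0)"
      by (rule sum.delta'[OF finite_cartesian_product[OF assms(1) assms(1)]])
    also have "\<dots> = X i j" using zoD[OF assms(2), of i j] by auto
    finally have "(\<Sum>cd\<in>C \<times> C. smul (X (fst cd) (snd cd)) (unitC (fst cd) (snd cd))) i j = X i j" . }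
  then have "(\<Sum>cd\<in>C \<times> C. smul (X (fst cd) (snd cd)) (unitC (fst cd) (snd cd))) = X" by (intro ext)
  then show ?thesis by simp
qed

lemma zo_in_span:
  assumes "finite C" "zo C X"
  shows "X \<in> mv.span ((\<lambda>cd. unitC (fst cd) (snd cd)) ` (C \<times> C))"
  apply (subst zo_expand[OF assms])
  apply (rule mv.span_sum)
  apply (rule mv.span_scale)
  apply (rule mv.span_base)
  by auto

lemma exists_relation:
  assumes fin: "finite C" and zq: "zo C Q"
  shows "\<exists>K a. (\<Sum>k\<le>K. smul (a k) (mpow C Q k)) = 0 \<and> (\<exists>k\<le>K. a k \<noteq> 0)"
proof -
  define T where "T = (\<lambda>cd. unitC (fst cd) (snd cd)) ` (C \<times> C)"
  have finT: "finite T" using fin by (simp add: T_def)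
  define N where "N = card T"
  show ?thesis
  proof (cases "inj_on (mpow C Q) {..N}")
    case False
    then obtain i j where ij: "i \<le> N" "j \<le> N" "i \<noteq> j" "mpow C Q i = mpow C Q j"
      by (auto simp: inj_on_def)
    define a where "a = (\<lambda>k. if k = i then (1::complex) else if k = j then -1 else 0)"
    have "(\<Sum>k\<le>N. smul (a k) (mpow C Q k)) = (\<Sum>k\<le>N. (if k = i then mpow C Q i else 0) + (if k = j then smul (-1) (mpow C Q j) else 0))"
      by (intro sum.cong) (auto simp: a_def smul_def fun_eq_iff ij)
    also have "\<dots> = mpow C Q i + smul (-1) (mpow C Q j)"
      using ij by (simp add: sum.distrib)
    also have "\<dots> = 0" using ij by (simp add: smul_def fun_eq_iff)
    finally show ?thesis using ij by (intro exI[of _ N] exI[of _ a]) (auto simp: a_def)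
  next
    case True
    define S where "S = mpow C Q ` {..N}"
    have cardS: "card S = N + 1" using True by (simp add: S_def card_image)
    have "S \<subseteq> mv.span T" unfolding S_def T_def using zo_in_span[OF fin] by auto
    then have "\<not> mv.independent S"
    proof -
      assume sp: "S \<subseteq> mv.span T"
      show ?thesis
      proof
        assume "mv.independent S"
        then have "card S \<le> card T" using mv.independent_span_bound[OF finT _ sp] by simp
        with cardS show False by (simp add: N_def)
      qed
    qed
    then obtain U u where U: "finite U" "U \<subseteq> S" "(\<Sum>v\<in>U. smul (u v) v) = 0" "\<exists>v\<in>U. u v \<noteq> 0"
      unfolding mv.dependent_explicit by blast
    define a where "a = (\<lambda>k. if mpow C Q k \<in> U then u (mpow C Q k) else 0)"
    define A where "A = {k\<in>{..N}. mpow C Q k \<in> U}"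
    have imA: "mpow C Q ` A = U" using U(2) by (auto simp: A_def S_def)
    have injA: "inj_on (mpow C Q) A" using True by (rule inj_on_subset) (auto simp: A_def)
    have "(\<Sum>k\<le>N. smul (a k) (mpow C Q k)) = (\<Sum>k\<in>A. smul (a k) (mpow C Q k))"
      by (rule sum.mono_neutral_right) (auto simp: A_def a_def smul_def fun_eq_iff)
    also have "\<dots> = (\<Sum>k\<in>A. smul (u (mpow C Q k)) (mpow C Q k))"
      by (intro sum.cong) (auto simp: A_def a_def)
    also have "\<dots> = (\<Sum>v\<in>U. smul (u v) v)"
      using sum.reindex[OF injA, of "\<lambda>v. smul (u v) v"] imA by simp
    also have "\<dots> = 0" by (rule U(3))
    finally have rel: "(\<Sum>k\<le>N. smul (a k) (mpow C Q k)) = 0" .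
    from U(4) obtain v where v: "v \<in> U" "u v \<noteq> 0" by blast
    then obtain k where k: "k \<le> N" "v = mpow C Q k" using U(2) by (auto simp: S_def)
    then have "a k \<noteq> 0" using v by (auto simp: a_def)
    then show ?thesis using rel k by blast
  qed
qed

lemma mat_inj:
  assumes fin: "finite C"
    and inj: "\<And>z. (\<forall>c\<in>C. (\<Sum>d\<in>C. Q c d * z d) = 0) \<Longrightarrow> (\<forall>c\<in>C. z c = 0)"
    and zz: "zo C Z" and e: "mm C Q Z = 0"
  shows "Z = 0"
proof -
  { fix c' e' assume ce: "c' \<in> C" "e' \<in> C"
    have "\<forall>c\<in>C. (\<Sum>d\<in>C. Q c d * Z d e') = 0"
    proof
      fix c assume c: "c \<in> C"
      have "mm C Q Z c e' = 0" using e by simp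
      then show "(\<Sum>d\<in>C. Q c d * Z d e') = 0" using c ce by (simp add: mm_apply)
    qed
    hence "Z c' e' = 0" using inj[of "\<lambda>d. Z d e'"] ce by blast }
  then show ?thesis using zz by (auto simp: fun_eq_iff zo_def)
qed

lemma mpow_inj:
  assumes fin: "finite C"
    and inj: "\<And>z. (\<forall>c\<in>C. (\<Sum>d\<in>C. Q c d * z d) = 0) \<Longrightarrow> (\<forall>c\<in>C. z c = 0)"
  shows "zo C Z \<Longrightarrow> mm C (mpow C Q k) Z = 0 \<Longrightarrow> Z = 0"
proof (induction k arbitrary: Z)
  case 0 then show ?case using fin by (simp add: mm_idm_left)
next
  case (Suc k)
  have "mm C Q (mm C (mpow C Q k) Z) = 0" using Suc.prems(2) fin by (simp only: mpow.simps mm_assoc)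
  then have "mm C (mpow C Q k) Z = 0" using mat_inj[OF fin inj] by simp
  then show ?case using Suc by blast
qed

lemma poly_inverse:
  assumes fin: "finite C" and zq: "zo C Q"
    and inj: "\<And>z. (\<forall>c\<in>C. (\<Sum>d\<in>C. Q c d * z d) = 0) \<Longrightarrow> (\<forall>c\<in>C. z c = 0)"
  shows "\<exists>J b. mm C Q (\<Sum>j<J. smul (b j) (mpow C Q j)) = idm C"
proof -
  obtain K a where rel: "(\<Sum>k\<le>K. smul (a k) (mpow C Q k)) = 0" and nz: "\<exists>k\<le>K. a k \<noteq> 0"
    using exists_relation[OF fin zq] by blast
  define k0 where "k0 = (LEAST k. a k \<noteq> 0)"
  have ak0: "a k0 \<noteq> 0"
  proof -
    from nz obtain k where "a k \<noteq> 0" by blast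
    then show ?thesis unfolding k0_def by (rule LeastI)
  qed
  have k0K: "k0 \<le> K" using nz unfolding k0_def by (meson Least_le le_trans)
  have below: "k < k0 \<Longrightarrow> a k = 0" for k unfolding k0_def using not_less_Least by blast
  define J where "J = K - k0"
  define c where "c = (\<lambda>j. a (k0 + j))"
  have "(\<Sum>k\<le>K. smul (a k) (mpow C Q k)) = (\<Sum>k\<in>{k0..K}. smul (a k) (mpow C Q k))"
    by (rule sum.mono_neutral_right) (auto simp: below smul_def fun_eq_iff)
  also have "\<dots> = (\<Sum>j\<le>J. smul (c j) (mpow C Q (k0 + j)))"
  proof -
    have "{k0..K} = (\<lambda>j. k0 + j) ` {..J}" using k0K
      apply (auto simp: J_def image_iff)
      subgoal for x by (rule bexI[of _ "x - k0"]) auto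
      done
    then show ?thesis by (simp add: sum.reindex c_def)
  qed
  also have "\<dots> = mm C (mpow C Q k0) (\<Sum>j\<le>J. smul (c j) (mpow C Q j))"
    by (simp add: mm_sum_right mm_smul_right mpow_add fin)
  finally have "mm C (mpow C Q k0) (\<Sum>j\<le>J. smul (c j) (mpow C Q j)) = 0" using rel by simp
  then have rel2: "(\<Sum>j\<le>J. smul (c j) (mpow C Q j)) = 0"
    using mpow_inj[OF fin inj] by (simp add: zo_sum zo_smul)
  have c0: "c 0 \<noteq> 0" using ak0 by (simp add: c_def)
  have "(\<Sum>j\<le>J. smul (c j) (mpow C Q j)) = smul (c 0) (mpow C Q 0) + (\<Sum>j<J. smul (c (Suc j)) (mpow C Q (Suc j)))"
    unfolding lessThan_Suc_atMost[symmetric] by (rule sum.lessThan_Suc_shift)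
  also have "\<dots> = smul (c 0) (idm C) + mm C Q (\<Sum>j<J. smul (c (Suc j)) (mpow C Q j))"
    by (simp add: mm_sum_right mm_smul_right)
  finally have "smul (c 0) (idm C) + mm C Q (\<Sum>j<J. smul (c (Suc j)) (mpow C Q j)) = 0" using rel2 by simp
  then have "mm C Q (\<Sum>j<J. smul (- c (Suc j) / c 0) (mpow C Q j)) = idm C"
  proof -
    assume h: "smul (c 0) (idm C) + mm C Q (\<Sum>j<J. smul (c (Suc j)) (mpow C Q j)) = 0"
    have "(\<Sum>j<J. smul (- c (Suc j) / c 0) (mpow C Q j)) = smul (- 1 / c 0) (\<Sum>j<J. smul (c (Suc j)) (mpow C Q j))"
      by (simp add: smul_sum smul_smul)
    then have "mm C Q (\<Sum>j<J. smul (- c (Suc j) / c 0) (mpow C Q j)) = smul (- 1 / c 0) (mm C Q (\<Sum>j<J. smul (c (Suc j)) (mpow C Q j)))"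
      by (simp only: mm_smul_right)
    also have "mm C Q (\<Sum>j<J. smul (c (Suc j)) (mpow C Q j)) = - smul (c 0) (idm C)"
      using h by (simp add: eq_neg_iff_add_eq_0 add.commute)
    also have "smul (- 1 / c 0) (- smul (c 0) (idm C)) = idm C"
      using c0 by (simp add: smul_def fun_eq_iff)
    finally show ?thesis .
  qed
  then show ?thesis by (intro exI[of _ J] exI[of _ "\<lambda>j. - c (Suc j) / c 0"])
qed


definition mvec :: "'c set \<Rightarrow> 'c mat \<Rightarrow> ('c \<Rightarrow> complex) \<Rightarrow> ('c \<Rightarrow> complex)" where
  "mvec C A z = (\<lambda>c. \<Sum>d\<in>C. A c d * z d)"

definition ip :: "'c set \<Rightarrow> ('c \<Rightarrow> complex) \<Rightarrow> ('c \<Rightarrow> complex) \<Rightarrow> complex" where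
  "ip C y z = (\<Sum>c\<in>C. cnj (y c) * z c)"

lemma mvec_mm: "c \<in> C \<Longrightarrow> mvec C (mm C A B) z c = mvec C A (mvec C B z) c"
proof -
  assume c: "c \<in> C"
  have "mvec C (mm C A B) z c = (\<Sum>d\<in>C. \<Sum>e\<in>C. A c e * B e d * z d)"
    unfolding mvec_def by (intro sum.cong refl) (simp add: mm_def c sum_distrib_right)
  also have "\<dots> = (\<Sum>e\<in>C. \<Sum>d\<in>C. A c e * B e d * z d)" by (rule sum.swap)
  also have "\<dots> = mvec C A (mvec C B z) c"
    unfolding mvec_def by (simp add: sum_distrib_left mult.assoc)
  finally show ?thesis .
qed

lemma mvec_cong: "(\<And>d. d \<in> C \<Longrightarrow> z d = z' d) \<Longrightarrow> mvec C A z c = mvec C A z' c"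
  by (simp add: mvec_def)

lemma ip_cong: "(\<And>d. d \<in> C \<Longrightarrow> z d = z' d) \<Longrightarrow> (\<And>d. d \<in> C \<Longrightarrow> y d = y' d) \<Longrightarrow> ip C y z = ip C y' z'"
  by (simp add: ip_def)

lemma ip_adj: "ip C y (mvec C A z) = ip C (mvec C (adj A) y) z"
proof -
  have "ip C y (mvec C A z) = (\<Sum>c\<in>C. \<Sum>d\<in>C. cnj (y c) * A c d * z d)"
    by (simp add: ip_def mvec_def sum_distrib_left mult.assoc)
  also have "\<dots> = (\<Sum>d\<in>C. \<Sum>c\<in>C. cnj (y c) * A c d * z d)" by (rule sum.swap)
  also have "\<dots> = ip C (mvec C (adj A) y) z"
    by (simp add: ip_def mvec_def adj_def sum_distrib_right sum_distrib_left mult_ac)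
  finally show ?thesis .
qed

lemma ip_self: "ip C y y = of_real (\<Sum>c\<in>C. (cmod (y c))\<^sup>2)"
  unfolding ip_def of_real_sum by (intro sum.cong refl) (simp add: complex_norm_square[symmetric] mult.commute)

lemma mvec_add: "mvec C (A + B) z c = mvec C A z c + mvec C B z c"
  by (simp add: mvec_def distrib_right sum.distrib)

lemma mvec_diff: "mvec C (A - B) z c = mvec C A z c - mvec C B z c"
  by (simp add: mvec_def left_diff_distrib sum_subtractf)

lemma mvec_sum: "mvec C (\<Sum>i\<in>I. A i) z c = (\<Sum>i\<in>I. mvec C (A i) z c)"
  unfolding mvec_def sum_fun_app sum_distrib_right by (rule sum.swap)

lemma mvec_idm: "finite C \<Longrightarrow> c \<in> C \<Longrightarrow> mvec C (idm C) z c = z c"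
proof -
  assume f: "finite C" and c: "c \<in> C"
  have "mvec C (idm C) z c = (\<Sum>d\<in>C. if c = d then z d else 0)"
    unfolding mvec_def using c by (intro sum.cong) (auto simp: idm_def)
  also have "\<dots> = z c" using f c by simp
  finally show ?thesis .
qed

lemma mm_idm_on_left: "finite A \<Longrightarrow> a \<in> A \<Longrightarrow> a' \<in> A \<Longrightarrow> mm A (idm A) M a a' = M a a'"
proof -
  assume f: "finite A" and a: "a \<in> A" "a' \<in> A"
  have "mm A (idm A) M a a' = (\<Sum>d\<in>A. if a = d then M d a' else 0)"
    using a by (simp add: mm_def) (intro sum.cong, auto simp: idm_def)
  also have "\<dots> = M a a'" using f a by simp
  finally show ?thesis .
qed

lemma mm_idm_on_right: "finite A \<Longrightarrow> a \<in> A \<Longrightarrow> a' \<in> A \<Longrightarrow> mm A M (idm A) a a' = M a a'"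
proof -
  assume f: "finite A" and a: "a \<in> A" "a' \<in> A"
  have "mm A M (idm A) a a' = (\<Sum>d\<in>A. if d = a' then M a d else 0)"
    using a by (simp add: mm_def) (intro sum.cong, auto simp: idm_def)
  also have "\<dots> = M a a'" using f a by simp
  finally show ?thesis .
qed

lemma mpow_comm: "finite C \<Longrightarrow> zo C B \<Longrightarrow> mm C A B = mm C B A \<Longrightarrow> mm C (mpow C A j) B = mm C B (mpow C A j)"
proof (induction j)
  case 0 then show ?case by (simp add: mm_idm_left mm_idm_right)
next
  case (Suc j) then show ?case by (simp add: mm_assoc) (metis mm_assoc)
qed

locale bip =
  fixes C :: "'c set" and Ar :: "'a set" and Bb :: "'b set"
    and p :: "'c \<Rightarrow> 'a" and q :: "'c \<Rightarrow> 'b" and m :: "'a \<Rightarrow> 'b \<Rightarrow> 'c"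
  assumes finAr: "finite Ar" and finBb: "finite Bb"
    and p_in: "c \<in> C \<Longrightarrow> p c \<in> Ar" and q_in: "c \<in> C \<Longrightarrow> q c \<in> Bb"
    and m_in: "a \<in> Ar \<Longrightarrow> b \<in> Bb \<Longrightarrow> m a b \<in> C"
    and p_m: "a \<in> Ar \<Longrightarrow> b \<in> Bb \<Longrightarrow> p (m a b) = a"
    and q_m: "a \<in> Ar \<Longrightarrow> b \<in> Bb \<Longrightarrow> q (m a b) = b"
    and m_pq: "c \<in> C \<Longrightarrow> m (p c) (q c) = c"
begin

lemma bij: "bij_betw (\<lambda>ab. m (fst ab) (snd ab)) (Ar \<times> Bb) C"
  by (rule bij_betw_byWitness[where f'="\<lambda>c. (p c, q c)"])
     (auto simp: p_m q_m m_pq m_in p_in q_in image_iff intro!: bexI[of _ "(p _, q _)"])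

lemma finC: "finite C"
  using bij_betw_finite[OF bij] finAr finBb by simp

lemma sum_split: "(\<Sum>c\<in>C. f c) = (\<Sum>a\<in>Ar. \<Sum>b\<in>Bb. f (m a b))"
  using sum.reindex_bij_betw[OF bij, of f] by (simp add: sum.cartesian_product case_prod_beta)

lemma eq_iff: "c \<in> C \<Longrightarrow> c' \<in> C \<Longrightarrow> c = c' \<longleftrightarrow> p c = p c' \<and> q c = q c'"
  by (metis m_pq)

definition prodop :: "'a mat \<Rightarrow> 'b mat \<Rightarrow> 'c mat" where
  "prodop W1 W2 = (\<lambda>c c'. if c \<in> C \<and> c' \<in> C then W1 (p c) (p c') * W2 (q c) (q c') else 0)"

lemma zo_prodop[simp]: "zo C (prodop W1 W2)"
  by (simp add: zo_def prodop_def)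

lemma mm_prodop: "mm C (prodop W1 W2) (prodop W3 W4) = prodop (mm Ar W1 W3) (mm Bb W2 W4)"
proof -
  { fix c e assume ce: "c \<in> C" "e \<in> C"
    have "mm C (prodop W1 W2) (prodop W3 W4) c e
       = (\<Sum>d\<in>C. W1 (p c) (p d) * W2 (q c) (q d) * (W3 (p d) (p e) * W4 (q d) (q e)))"
      using ce by (simp add: mm_def prodop_def)
    also have "\<dots> = (\<Sum>a\<in>Ar. \<Sum>b\<in>Bb. W1 (p c) a * W2 (q c) b * (W3 a (p e) * W4 b (q e)))"
      by (simp add: sum_split p_m q_m cong: sum.cong)
    also have "\<dots> = (\<Sum>a\<in>Ar. W1 (p c) a * W3 a (p e)) * (\<Sum>b\<in>Bb. W2 (q c) b * W4 b (q e))"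
      by (simp add: sum_product mult_ac)
    also have "\<dots> = prodop (mm Ar W1 W3) (mm Bb W2 W4) c e"
      using ce by (simp add: prodop_def mm_def p_in q_in)
    finally have "mm C (prodop W1 W2) (prodop W3 W4) c e = prodop (mm Ar W1 W3) (mm Bb W2 W4) c e" . }
  then show ?thesis by (auto simp: fun_eq_iff mm_def prodop_def)
qed

lemma prodop_cong:
  "(\<And>a a'. a \<in> Ar \<Longrightarrow> a' \<in> Ar \<Longrightarrow> W1 a a' = W1' a a') \<Longrightarrow>
   (\<And>b b'. b \<in> Bb \<Longrightarrow> b' \<in> Bb \<Longrightarrow> W2 b b' = W2' b b') \<Longrightarrow> prodop W1 W2 = prodop W1' W2'"
  by (auto simp: prodop_def fun_eq_iff p_in q_in)

lemma idm_prodop: "idm C = prodop (idm Ar) (idm Bb)"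
  by (auto simp: prodop_def idm_def fun_eq_iff p_in q_in dest: eq_iff)

lemma adj_prodop: "adj (prodop W1 W2) = prodop (adj W1) (adj W2)"
  by (auto simp: prodop_def adj_def fun_eq_iff)

lemma prodop_add1: "prodop (W + W') V = prodop W V + prodop W' V"
  by (auto simp: prodop_def fun_eq_iff distrib_right)

lemma prodop_add2: "prodop V (W + W') = prodop V W + prodop V W'"
  by (auto simp: prodop_def fun_eq_iff distrib_left)

lemma prodop_sum1: "prodop (\<Sum>i\<in>I. W i) V = (\<Sum>i\<in>I. prodop (W i) V)"
  by (auto simp: prodop_def fun_eq_iff sum_fun_app sum_distrib_right)

lemma prodop_sum2: "prodop V (\<Sum>i\<in>I. W i) = (\<Sum>i\<in>I. prodop V (W i))"
  by (auto simp: prodop_def fun_eq_iff sum_fun_app sum_distrib_left)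

lemma prodop_smul2: "prodop V (smul a W) = smul a (prodop V W)"
  by (auto simp: prodop_def fun_eq_iff smul_def)

definition loc1 :: "'a mat \<Rightarrow> 'c mat" where "loc1 M = prodop M (idm Bb)"
definition loc2 :: "'b mat \<Rightarrow> 'c mat" where "loc2 N = prodop (idm Ar) N"

lemma zo_loc1[simp]: "zo C (loc1 M)" and zo_loc2[simp]: "zo C (loc2 N)"
  by (simp_all add: loc1_def loc2_def)

lemma loc_comm: "mm C (loc1 M) (loc2 N) = mm C (loc2 N) (loc1 M)"
  unfolding loc1_def loc2_def mm_prodop
  by (rule prodop_cong) (simp_all add: mm_idm_on_left mm_idm_on_right finAr finBb)

lemma loc2_mm: "mm C (loc2 N) (loc2 N') = loc2 (mm Bb N N')"
  unfolding loc2_def mm_prodop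
  by (rule prodop_cong) (simp_all add: mm_idm_on_left finAr)

lemma loc2_idm: "loc2 (idm Bb) = idm C"
  by (simp add: loc2_def idm_prodop)

lemma loc2_mpow: "loc2 (mpow Bb N j) = mpow C (loc2 N) j"
  by (induction j) (simp_all add: loc2_idm loc2_mm[symmetric])

definition tr1 :: "'c mat \<Rightarrow> 'b mat" where
  "tr1 X = (\<lambda>b b'. if b \<in> Bb \<and> b' \<in> Bb then (\<Sum>a\<in>Ar. X (m a b) (m a b')) else 0)"

definition unitE :: "'a \<Rightarrow> 'a \<Rightarrow> 'a mat" where
  "unitE a1 a2 = (\<lambda>i j. if i = a1 \<and> j = a2 then 1 else 0)"

lemma E_left:
  assumes a: "a \<in> Ar" "b \<in> Ar"
  shows "mm C (loc1 (unitE a b)) Y = (\<lambda>c d. if c \<in> C \<and> d \<in> C \<and> p c = a then Y (m b (q c)) d else 0)"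
proof -
  { fix c d assume cd: "c \<in> C" "d \<in> C"
    have "mm C (loc1 (unitE a b)) Y c d = (\<Sum>a'\<in>Ar. \<Sum>b'\<in>Bb.
        (if p c = a \<and> a' = b then 1 else 0) * (if q c = b' then 1 else 0) * Y (m a' b') d)"
      using cd by (simp add: mm_def loc1_def prodop_def sum_split p_m q_m m_in unitE_def idm_def q_in cong: sum.cong)
    also have "\<dots> = (\<Sum>a'\<in>Ar. if a' = b then (if p c = a then Y (m a' (q c)) d else 0) else 0)"
    proof (intro sum.cong refl)
      fix a' assume "a' \<in> Ar"
      have "(\<Sum>b'\<in>Bb. (if p c = a \<and> a' = b then 1 else 0) * (if q c = b' then 1 else 0) * Y (m a' b') d)
          = (\<Sum>b'\<in>Bb. if q c = b' then (if p c = a \<and> a' = b then Y (m a' b') d else 0) else 0)"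
        by (intro sum.cong refl) auto
      also have "\<dots> = (if p c = a \<and> a' = b then Y (m a' (q c)) d else 0)"
        using finBb q_in[OF cd(1)] by (simp add: sum.delta)
      finally show "(\<Sum>b'\<in>Bb. (if p c = a \<and> a' = b then 1 else 0) * (if q c = b' then 1 else 0) * Y (m a' b') d)
          = (if a' = b then (if p c = a then Y (m a' (q c)) d else 0) else 0)" by auto
    qed
    also have "\<dots> = (if p c = a then Y (m b (q c)) d else 0)"
      using finAr a by (simp add: sum.delta)
    finally have "mm C (loc1 (unitE a b)) Y c d = (if p c = a then Y (m b (q c)) d else 0)" . }
  then show ?thesis by (auto simp: fun_eq_iff mm_def)
qed

lemma E_right:
  assumes a: "a \<in> Ar" "b \<in> Ar"
  shows "mm C Z (loc1 (unitE b a)) = (\<lambda>c e. if c \<in> C \<and> e \<in> C \<and> p e = a then Z c (m b (q e)) else 0)"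
proof -
  { fix c e assume ce: "c \<in> C" "e \<in> C"
    have "mm C Z (loc1 (unitE b a)) c e = (\<Sum>a'\<in>Ar. \<Sum>b'\<in>Bb.
        Z c (m a' b') * ((if a' = b \<and> p e = a then 1 else 0) * (if b' = q e then 1 else 0)))"
      using ce by (simp add: mm_def loc1_def prodop_def sum_split p_m q_m m_in unitE_def idm_def q_in cong: sum.cong)
    also have "\<dots> = (\<Sum>a'\<in>Ar. if a' = b then (if p e = a then Z c (m a' (q e)) else 0) else 0)"
    proof (intro sum.cong refl)
      fix a' assume "a' \<in> Ar"
      have "(\<Sum>b'\<in>Bb. Z c (m a' b') * ((if a' = b \<and> p e = a then 1 else 0) * (if b' = q e then 1 else 0)))
          = (\<Sum>b'\<in>Bb. if b' = q e then (if a' = b \<and> p e = a then Z c (m a' b') else 0) else 0)"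
        by (intro sum.cong refl) auto
      also have "\<dots> = (if a' = b \<and> p e = a then Z c (m a' (q e)) else 0)"
        using finBb q_in[OF ce(2)] by (simp add: sum.delta)
      finally show "(\<Sum>b'\<in>Bb. Z c (m a' b') * ((if a' = b \<and> p e = a then 1 else 0) * (if b' = q e then 1 else 0)))
          = (if a' = b then (if p e = a then Z c (m a' (q e)) else 0) else 0)" by auto
    qed
    also have "\<dots> = (if p e = a then Z c (m b (q e)) else 0)"
      using finAr a by (simp add: sum.delta)
    finally have "mm C Z (loc1 (unitE b a)) c e = (if p e = a then Z c (m b (q e)) else 0)" . }
  then show ?thesis by (auto simp: fun_eq_iff mm_def)
qed

end


lemma ip_zero: "(\<And>c. c \<in> C \<Longrightarrow> z c = 0) \<Longrightarrow> ip C y z = 0"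
  by (simp add: ip_def)

lemma ip_sum_right: "ip C y (\<lambda>c. \<Sum>i\<in>I. f i c) = (\<Sum>i\<in>I. ip C y (f i))"
  unfolding ip_def sum_distrib_left by (rule sum.swap)

lemma mvec_lin: "mvec C A (\<lambda>d. \<Sum>i\<in>I. f i d) c = (\<Sum>i\<in>I. mvec C A (f i) c)"
  unfolding mvec_def sum_distrib_left by (rule sum.swap)

lemma ipform:
  assumes fC: "finite C" and Ph: "adj P = P" and Pi: "mm C P P = P"
  shows "ip C z (mvec C (mm C P (mm C A (mm C P (mm C (adj A) P)))) z)
       = ip C (mvec C P (mvec C (adj A) (mvec C P z))) (mvec C P (mvec C (adj A) (mvec C P z)))"
proof -
  define x where "x = mvec C (adj A) (mvec C P z)"
  define y where "y = mvec C (mm C P (mm C (adj A) P)) z"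
  have y_eq: "y c = mvec C P x c" if "c \<in> C" for c
  proof -
    have "y c = mvec C P (mvec C (mm C (adj A) P) z) c" unfolding y_def using that by (rule mvec_mm)
    also have "\<dots> = mvec C P x c" unfolding x_def by (rule mvec_cong) (simp add: mvec_mm)
    finally show ?thesis .
  qed
  have "ip C z (mvec C (mm C P (mm C A (mm C P (mm C (adj A) P)))) z) = ip C z (mvec C P (mvec C A y))"
    unfolding y_def by (rule ip_cong) (simp_all add: mvec_mm, rule mvec_cong, simp add: mvec_mm)
  also have "\<dots> = ip C (mvec C P z) (mvec C A y)" by (simp add: ip_adj Ph)
  also have "\<dots> = ip C x y" unfolding x_def by (simp add: ip_adj)
  also have "\<dots> = ip C x (mvec C P x)" by (rule ip_cong) (simp_all add: y_eq)
  also have "\<dots> = ip C x (mvec C P (mvec C P x))"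
    by (rule ip_cong) (simp_all add: mvec_mm[symmetric] Pi)
  also have "\<dots> = ip C (mvec C P x) (mvec C P x)" by (simp add: ip_adj Ph)
  finally show ?thesis unfolding x_def .
qed

context bip begin

lemma F1:
  assumes zY: "zo C Y"
  shows "(\<Sum>a\<in>Ar. \<Sum>b\<in>Ar. mm C (mm C (loc1 (unitE a b)) Y) (loc1 (unitE b a))) = loc2 (tr1 Y)"
proof -
  { fix c e assume ce: "c \<in> C" "e \<in> C"
    have "(\<Sum>a\<in>Ar. \<Sum>b\<in>Ar. mm C (mm C (loc1 (unitE a b)) Y) (loc1 (unitE b a))) c e
        = (\<Sum>a\<in>Ar. \<Sum>b\<in>Ar. if a = p e then (if p c = a then Y (m b (q c)) (m b (q e)) else 0) else 0)"
      unfolding sum_fun_app using ce by (intro sum.cong refl) (auto simp: E_right E_left m_in q_in)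
    also have "\<dots> = (\<Sum>a\<in>Ar. if a = p e then (if p c = a then (\<Sum>b\<in>Ar. Y (m b (q c)) (m b (q e))) else 0) else 0)"
      by (intro sum.cong refl) auto
    also have "\<dots> = (if p c = p e then (\<Sum>b\<in>Ar. Y (m b (q c)) (m b (q e))) else 0)"
      using finAr p_in[OF ce(2)] by (simp add: sum.delta)
    also have "\<dots> = loc2 (tr1 Y) c e"
      using ce by (simp add: loc2_def prodop_def idm_def tr1_def p_in q_in)
    finally have "(\<Sum>a\<in>Ar. \<Sum>b\<in>Ar. mm C (mm C (loc1 (unitE a b)) Y) (loc1 (unitE b a))) c e = loc2 (tr1 Y) c e" . }
  moreover have "zo C (\<Sum>a\<in>Ar. \<Sum>b\<in>Ar. mm C (mm C (loc1 (unitE a b)) Y) (loc1 (unitE b a)))"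
    by (intro zo_sum) simp
  ultimately show ?thesis using zoD[OF zo_loc2[of "tr1 Y"]] unfolding zo_def by (intro ext) (metis (no_types, lifting))
qed

lemma sum_unit_diag: "(\<Sum>a\<in>Ar. loc1 (unitE a a)) = idm C"
proof -
  have "(\<Sum>a\<in>Ar. loc1 (unitE a a)) = prodop (\<Sum>a\<in>Ar. unitE a a) (idm Bb)"
    by (simp add: loc1_def prodop_sum1)
  also have "\<dots> = prodop (idm Ar) (idm Bb)"
  proof (rule prodop_cong)
    show "\<And>b b'. idm Bb b b' = idm Bb b b'" by simp
  next
    fix i j assume ij: "i \<in> Ar" "j \<in> Ar"
    have "(\<Sum>a\<in>Ar. unitE a a) i j = (\<Sum>a\<in>Ar. if a = i then (if i = j then 1 else 0) else 0)"
      unfolding sum_fun_app by (intro sum.cong refl) (auto simp: unitE_def)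
    also have "\<dots> = idm Ar i j" using finAr ij by (simp add: idm_def)
    finally show "(\<Sum>a\<in>Ar. unitE a a) i j = idm Ar i j" .
  qed
  finally show ?thesis by (simp add: idm_prodop)
qed

lemma adj_E: "adj (loc1 (unitE a b)) = loc1 (unitE b a)"
  unfolding loc1_def adj_prodop adj_idm
  by (rule prodop_cong) (auto simp: adj_def unitE_def)


lemma core2:
  assumes zP: "zo C P" and Pidem: "mm C P P = P"
    and Mc: "mm C (loc1 M') P = mm C P (loc1 M')"
    and MM: "mm C (mm C P (loc1 M)) P = mm C (mm C P (loc1 M')) P"
  shows "mm C (mm C (mm C P (loc2 N)) P) (mm C (mm C P (loc1 M)) P)
       = mm C (mm C (mm C P (loc1 M)) P) (mm C (mm C P (loc2 N)) P)"
proof -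
  note fC = finC
  have "mm C (mm C P (loc1 M)) P = mm C (mm C P (loc1 M')) P" by (rule MM)
  also have "\<dots> = mm C P (mm C P (loc1 M'))" by (simp add: mm_assoc[OF fC] Mc)
  also have "\<dots> = mm C (mm C P P) (loc1 M')" by (simp only: mm_assoc[OF fC])
  also have "\<dots> = mm C (loc1 M') P" by (simp add: Pidem Mc)
  finally have Z: "mm C (mm C P (loc1 M)) P = mm C (loc1 M') P" .
  have PLP: "mm C P (mm C (loc1 M') P) = mm C (loc1 M') P"
  proof -
    have "mm C P (mm C (loc1 M') P) = mm C (mm C P P) (loc1 M')" by (simp add: Mc mm_assoc[OF fC])
    then show ?thesis by (simp add: Pidem Mc)
  qed
  have 1: "mm C (mm C (mm C P (loc2 N)) P) (mm C (loc1 M') P) = mm C P (mm C (mm C (loc2 N) (loc1 M')) P)"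
    by (simp add: mm_assoc[OF fC] PLP)
  have "mm C (mm C (loc1 M') P) (mm C (mm C P (loc2 N)) P) = mm C (mm C (loc1 M') (mm C P P)) (mm C (loc2 N) P)"
    by (simp only: mm_assoc[OF fC])
  also have "\<dots> = mm C (mm C P (loc1 M')) (mm C (loc2 N) P)"
    by (simp add: Pidem Mc)
  finally have 2: "mm C (mm C (loc1 M') P) (mm C (mm C P (loc2 N)) P) = mm C P (mm C (mm C (loc1 M') (loc2 N)) P)"
    by (simp add: mm_assoc[OF fC])
  show ?thesis unfolding Z 1 2 loc_comm ..
qed


lemma loc2_sum: "loc2 (\<Sum>i\<in>I. N i) = (\<Sum>i\<in>I. loc2 (N i))"
  by (simp add: loc2_def prodop_sum2)

lemma loc2_smul: "loc2 (smul a N) = smul a (loc2 N)"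
  by (simp add: loc2_def prodop_smul2)

lemma haag_core:
  assumes zP: "zo C P" and Pidem: "mm C P P = P" and Pherm: "adj P = P"
    and Rcomm: "mm C (loc2 (tr1 P)) P = mm C P (loc2 (tr1 P))"
    and zX: "zo C X" and XP: "mm C X P = X" and PX: "mm C P X = X"
    and comm: "\<And>M. mm C X (mm C (mm C P (loc1 M)) P) = mm C (mm C (mm C P (loc1 M)) P) X"
  shows "\<exists>N. X = mm C (mm C P (loc2 N)) P"
proof -
  note fC = finC
  define E where "E = (\<lambda>a b. loc1 (unitE a b))"
  define L where "L = loc2 (tr1 P)"
  define Q where "Q = mm C L P"
  have zL: "zo C L" by (simp add: L_def)
  have LP: "mm C L P = mm C P L" using Rcomm by (simp add: L_def)
  have Xeq: "X = mm C (mm C P X) P" using PX XP by simp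
  have termab: "mm C (mm C P (mm C (mm C (E a b) X) (E b a))) P = mm C X (mm C P (mm C (E a b) (mm C P (mm C (E b a) P))))"
    for a b
  proof -
    have "mm C (mm C P (mm C (mm C (E a b) X) (E b a))) P = mm C (mm C (mm C (mm C P (E a b)) P) X) (mm C (mm C P (E b a)) P)"
      by (subst (1) Xeq) (simp only: mm_assoc[OF fC])
    also have "\<dots> = mm C (mm C X (mm C (mm C P (E a b)) P)) (mm C (mm C P (E b a)) P)"
      unfolding E_def by (simp only: comm)
    also have "\<dots> = mm C X (mm C P (mm C (E a b) (mm C (mm C P P) (mm C (E b a) P))))"
      by (simp only: mm_assoc[OF fC])
    also have "\<dots> = mm C X (mm C P (mm C (E a b) (mm C P (mm C (E b a) P))))"
      by (simp only: Pidem)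
    finally show ?thesis .
  qed
  have Lsum: "L = (\<Sum>a\<in>Ar. \<Sum>b\<in>Ar. mm C (mm C (E a b) P) (E b a))"
    by (simp add: L_def F1[OF zP] E_def)
  have "mm C (mm C P (loc2 (tr1 X))) P = (\<Sum>a\<in>Ar. \<Sum>b\<in>Ar. mm C (mm C P (mm C (mm C (E a b) X) (E b a))) P)"
    by (simp add: F1[OF zX, symmetric] E_def mm_sum_left mm_sum_right)
  also have "\<dots> = (\<Sum>a\<in>Ar. \<Sum>b\<in>Ar. mm C X (mm C P (mm C (E a b) (mm C P (mm C (E b a) P)))))"
    by (simp only: termab)
  also have "\<dots> = mm C X (mm C P (mm C L P))"
    unfolding Lsum by (simp add: mm_sum_left mm_sum_right mm_assoc[OF fC])
  finally have key1: "mm C (mm C P (loc2 (tr1 X))) P = mm C X (mm C P (mm C L P))" .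
  have PLP: "mm C P (mm C L P) = Q"
  proof -
    have "mm C P (mm C L P) = mm C (mm C P P) L" by (simp add: LP mm_assoc[OF fC])
    then show ?thesis by (simp add: Pidem Q_def LP)
  qed
  have key: "mm C (mm C P (loc2 (tr1 X))) P = mm C X Q" using key1 PLP by simp
  have zQ: "zo C Q" by (simp add: Q_def)
  have QP: "mm C Q P = Q" by (simp add: Q_def mm_assoc[OF fC] Pidem)
  have PQ: "mm C P Q = Q" using PLP by (simp add: Q_def)
  define Q' where "Q' = Q + idm C - P"
  have zQ': "zo C Q'" unfolding Q'_def by (intro zo_add zo_diff zQ zo_idm zP)
  have PQ': "mm C P Q' = Q"
    by (simp add: Q'_def mm_add_right mm_diff_right PQ Pidem mm_idm_right[OF zP fC])
  have Q'P: "mm C Q' P = Q"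
    by (simp add: Q'_def mm_add_left mm_diff_left QP Pidem mm_idm_left[OF zP fC])
  have XQ': "mm C X Q' = mm C X Q"
    by (simp add: Q'_def mm_add_right mm_diff_right XP mm_idm_right[OF zX fC])
  have inj: "\<forall>c\<in>C. z c = 0" if h: "\<forall>c\<in>C. (\<Sum>d\<in>C. Q' c d * z d) = 0" for z
  proof -
    have h': "\<And>c. c \<in> C \<Longrightarrow> mvec C Q' z c = 0" using h by (simp add: mvec_def)
    have Qz: "mvec C Q z c = 0" if c: "c \<in> C" for c
    proof -
      have "mvec C Q z c = mvec C (mm C P Q') z c" by (simp add: PQ')
      also have "\<dots> = mvec C P (mvec C Q' z) c" using c by (rule mvec_mm)
      also have "\<dots> = mvec C P (\<lambda>_. 0) c" by (rule mvec_cong) (simp add: h')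
      also have "\<dots> = 0" by (simp add: mvec_def)
      finally show ?thesis .
    qed
    have zPz: "z c = mvec C P z c" if c: "c \<in> C" for c
    proof -
      have "0 = mvec C Q' z c" using h' c by simp
      also have "\<dots> = mvec C Q z c + z c - mvec C P z c"
        by (simp add: Q'_def mvec_add mvec_diff mvec_idm[OF fC c])
      finally show ?thesis using Qz[OF c] by simp
    qed
    define v where "v = (\<lambda>a b. mvec C P (mvec C (E b a) (mvec C P z)))"
    have adjE: "adj (E a b) = E b a" for a b by (simp add: E_def adj_E)
    have "ip C z (mvec C Q z) = 0" by (rule ip_zero) (simp add: Qz)
    moreover have "ip C z (mvec C Q z) = (\<Sum>a\<in>Ar. \<Sum>b\<in>Ar. ip C (v a b) (v a b))"
    proof -
      have "Q = (\<Sum>a\<in>Ar. \<Sum>b\<in>Ar. mm C P (mm C (E a b) (mm C P (mm C (adj (E a b)) P))))"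
        unfolding PLP[symmetric] Lsum adjE by (simp add: mm_sum_left mm_sum_right mm_assoc[OF fC])
      then have "ip C z (mvec C Q z) = ip C z (\<lambda>c. \<Sum>a\<in>Ar. \<Sum>b\<in>Ar. mvec C (mm C P (mm C (E a b) (mm C P (mm C (adj (E a b)) P)))) z c)"
        by (intro ip_cong) (simp_all add: mvec_sum)
      also have "\<dots> = (\<Sum>a\<in>Ar. ip C z (\<lambda>c. \<Sum>b\<in>Ar. mvec C (mm C P (mm C (E a b) (mm C P (mm C (adj (E a b)) P)))) z c))"
        by (rule ip_sum_right)
      also have "\<dots> = (\<Sum>a\<in>Ar. \<Sum>b\<in>Ar. ip C z (mvec C (mm C P (mm C (E a b) (mm C P (mm C (adj (E a b)) P)))) z))"
        by (simp only: ip_sum_right)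
      also have "\<dots> = (\<Sum>a\<in>Ar. \<Sum>b\<in>Ar. ip C (v a b) (v a b))"
        by (simp only: ipform[OF fC Pherm Pidem]) (simp add: v_def adjE)
      finally show ?thesis .
    qed
    ultimately have "(\<Sum>a\<in>Ar. \<Sum>b\<in>Ar. ip C (v a b) (v a b)) = 0" by simp
    then have "complex_of_real (\<Sum>a\<in>Ar. \<Sum>b\<in>Ar. \<Sum>c\<in>C. (cmod (v a b c))\<^sup>2) = 0"
      by (simp only: ip_self of_real_sum)
    then have s0: "(\<Sum>a\<in>Ar. \<Sum>b\<in>Ar. \<Sum>c\<in>C. (cmod (v a b c))\<^sup>2) = 0" by (simp only: of_real_eq_0_iff)
    have vz: "v a b c = 0" if "a \<in> Ar" "b \<in> Ar" "c \<in> C" for a b c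
    proof -
      have "\<forall>a\<in>Ar. (\<Sum>b\<in>Ar. \<Sum>c\<in>C. (cmod (v a b c))\<^sup>2) = 0"
        using s0 by (subst (asm) sum_nonneg_eq_0_iff) (auto intro!: sum_nonneg simp: finAr)
      then have "\<forall>b\<in>Ar. (\<Sum>c\<in>C. (cmod (v a b c))\<^sup>2) = 0"
        using that by (subst (asm) sum_nonneg_eq_0_iff) (auto intro!: sum_nonneg simp: finAr)
      then have "\<forall>c\<in>C. (cmod (v a b c))\<^sup>2 = 0"
        using that by (subst (asm) sum_nonneg_eq_0_iff) (auto simp: fC)
      then show ?thesis using that by simp
    qed
    show ?thesis
    proof
      fix c assume c: "c \<in> C"
      have "z c = mvec C P z c" by (rule zPz[OF c])
      also have "\<dots> = mvec C P (mvec C (idm C) (mvec C P z)) c"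
        by (rule mvec_cong) (simp add: mvec_idm[OF fC] zPz)
      also have "\<dots> = mvec C P (\<lambda>d. \<Sum>a\<in>Ar. mvec C (E a a) (mvec C P z) d) c"
        by (rule mvec_cong) (simp add: sum_unit_diag[symmetric] E_def mvec_sum)
      also have "\<dots> = (\<Sum>a\<in>Ar. v a a c)" by (simp add: mvec_lin v_def)
      also have "\<dots> = 0" using vz c by simp
      finally show "z c = 0" .
    qed
  qed
  obtain J b where inv: "mm C Q' (\<Sum>j<J. smul (b j) (mpow C Q' j)) = idm C"
    using poly_inverse[OF fC zQ' inj] by blast
  define Inv where "Inv = (\<Sum>j<J. smul (b j) (mpow C Q' j))"
  have Ljc: "mm C (mpow C L j) P = mm C P (mpow C L j)" for j
    using mpow_comm[OF fC zP LP] by simp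
  have powP: "mm C (mpow C Q' j) P = mm C (mpow C L j) P" for j
  proof (induction j)
    case 0 then show ?case by simp
  next
    case (Suc j)
    have "mm C (mpow C Q' (Suc j)) P = mm C Q' (mm C (mpow C L j) P)"
      by (simp add: mm_assoc[OF fC] Suc)
    also have "\<dots> = mm C (mm C Q' P) (mpow C L j)" by (simp add: Ljc mm_assoc[OF fC])
    also have "\<dots> = mm C L (mm C P (mpow C L j))" by (simp add: Q'P Q_def mm_assoc[OF fC])
    also have "\<dots> = mm C (mpow C L (Suc j)) P" by (simp add: Ljc mm_assoc[OF fC])
    finally show ?case .
  qed
  define G where "G = (\<Sum>j<J. smul (b j) (mpow C L j))"
  have InvP: "mm C Inv P = mm C G P"
    by (simp add: Inv_def G_def mm_sum_left mm_smul_left powP)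
  have GP: "mm C G P = mm C P G"
    by (simp add: G_def mm_sum_left mm_sum_right mm_smul_left mm_smul_right Ljc)
  define N' where "N' = (\<Sum>j<J. smul (b j) (mpow Bb (tr1 P) j))"
  have Gl: "G = loc2 N'"
    by (simp add: G_def N'_def loc2_sum loc2_smul loc2_mpow L_def)
  have "X = mm C X P" using XP by simp
  also have "P = mm C (mm C Q' Inv) P" using inv by (simp add: Inv_def mm_idm_left[OF zP fC])
  finally have "X = mm C (mm C X Q') (mm C Inv P)" by (simp add: mm_assoc[OF fC])
  also have "\<dots> = mm C (mm C (mm C P (loc2 (tr1 X))) P) (mm C G P)" by (simp add: XQ' key InvP)
  also have "\<dots> = mm C P (mm C (loc2 (tr1 X)) (mm C (mm C P P) G))" by (simp add: GP mm_assoc[OF fC])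
  also have "\<dots> = mm C (mm C P (mm C (loc2 (tr1 X)) G)) P" by (simp add: Pidem GP mm_assoc[OF fC])
  also have "\<dots> = mm C (mm C P (loc2 (mm Bb (tr1 X) N'))) P" by (simp add: Gl loc2_mm)
  finally show ?thesis by blast
qed

end


lemma tensor_mult:
  assumes fT: "finite T"
  shows "mm (confs T D) (tensor T D Op1) (tensor T D Op2) = tensor T D (\<lambda>x i j. \<Sum>k<D x. Op1 x i k * Op2 x k j)"
proof -
  { fix c c'' assume c: "c \<in> confs T D" "c'' \<in> confs T D"
    have "mm (confs T D) (tensor T D Op1) (tensor T D Op2) c c''
        = (\<Sum>c'\<in>confs T D. \<Prod>x\<in>T. Op1 x (c x) (c' x) * Op2 x (c' x) (c'' x))"
      using c by (simp add: mm_def tensor_def prod.distrib)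
    also have "\<dots> = (\<Prod>x\<in>T. \<Sum>k<D x. Op1 x (c x) k * Op2 x k (c'' x))"
      unfolding confs_def by (rule prod_sum_PiE[symmetric]) (simp_all add: fT)
    finally have "mm (confs T D) (tensor T D Op1) (tensor T D Op2) c c'' = tensor T D (\<lambda>x i j. \<Sum>k<D x. Op1 x i k * Op2 x k j) c c''"
      using c by (simp add: tensor_def) }
  then show ?thesis by (auto simp: fun_eq_iff mm_def tensor_def)
qed

lemma tensor_cong:
  assumes "\<And>x i j. x \<in> T \<Longrightarrow> i < D x \<Longrightarrow> j < D x \<Longrightarrow> Op x i j = Op' x i j"
  shows "tensor T D Op = tensor T D Op'"
  using assms by (auto simp: tensor_def fun_eq_iff confs_def PiE_def Pi_def intro!: prod.cong)

lemma tensor_kdelta: "finite T \<Longrightarrow> tensor T D (\<lambda>_. kdelta) = idm (confs T D)"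
proof -
  assume fT: "finite T"
  { fix c c' assume c: "c \<in> confs T D" "c' \<in> confs T D"
    have "(\<Prod>x\<in>T. kdelta (c x) (c' x)) = (if c = c' then 1 else 0)"
    proof (cases "c = c'")
      case True then show ?thesis by (simp add: kdelta_def)
    next
      case False
      then obtain x where x: "c x \<noteq> c' x" by auto
      then have "x \<in> T" using c by (metis PiE_arb confs_def)
      then show ?thesis using False x fT by (auto simp: kdelta_def intro!: prod_zero bexI[of _ x])
    qed }
  then show ?thesis by (auto simp: tensor_def idm_def fun_eq_iff)
qed

lemma tensor_adj: "adj (tensor T D Op) = tensor T D (\<lambda>x i j. cnj (Op x j i))"
  by (auto simp: tensor_def adj_def fun_eq_iff)

lemma zo_tensor[simp]: "zo (confs T D) (tensor T D Op)"
  by (simp add: zo_def tensor_def)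

definition merge :: "'x set \<Rightarrow> 'x cfg \<Rightarrow> 'x cfg \<Rightarrow> 'x cfg" where
  "merge r a b = (\<lambda>x. if x \<in> r then a x else b x)"

lemma bip_confs:
  assumes fS: "finite S" and rS: "r \<subseteq> S"
  shows "bip (confs S D) (confs r D) (confs (S - r) D) (\<lambda>c. restrict c r) (\<lambda>c. restrict c (S - r)) (merge r)"
proof
  show "finite (confs r D)" using fS rS by (auto simp: confs_def intro!: finite_PiE intro: finite_subset)
  show "finite (confs (S - r) D)" using fS by (auto simp: confs_def intro!: finite_PiE)
  fix c assume "c \<in> confs S D"
  then show "restrict c r \<in> confs r D" "restrict c (S - r) \<in> confs (S - r) D"
      "merge r (restrict c r) (restrict c (S - r)) = c"
    using rS by (auto simp: confs_def merge_def PiE_def extensional_def fun_eq_iff)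
next
  fix a b assume ab: "a \<in> confs r D" "b \<in> confs (S - r) D"
  then show "merge r a b \<in> confs S D" "restrict (merge r a b) r = a" "restrict (merge r a b) (S - r) = b"
    using rS by (auto simp: confs_def merge_def PiE_def extensional_def fun_eq_iff Pi_def)
qed

lemma tensor_split:
  assumes fS: "finite S" and rS: "r \<subseteq> S"
  shows "tensor S D Op = bip.prodop (confs S D) (\<lambda>c. restrict c r) (\<lambda>c. restrict c (S - r)) (tensor r D Op) (tensor (S - r) D Op)"
proof -
  interpret bip "confs S D" "confs r D" "confs (S - r) D" "\<lambda>c. restrict c r" "\<lambda>c. restrict c (S - r)" "merge r"
    by (rule bip_confs[OF fS rS])
  { fix c c' assume c: "c \<in> confs S D" "c' \<in> confs S D"
    have "(\<Prod>x\<in>S. Op x (c x) (c' x)) = (\<Prod>x\<in>r. Op x (c x) (c' x)) * (\<Prod>x\<in>S - r. Op x (c x) (c' x))"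
      using fS rS by (metis (no_types, lifting) prod.subset_diff mult.commute)
    then have "tensor S D Op c c' = prodop (tensor r D Op) (tensor (S - r) D Op) c c'"
      using c p_in q_in by (simp add: tensor_def prodop_def) }
  then show ?thesis by (auto simp: fun_eq_iff tensor_def prodop_def)
qed


context bip begin

lemma tr1_conj:
  assumes inv: "\<And>a a'. a \<in> Ar \<Longrightarrow> a' \<in> Ar \<Longrightarrow> (\<Sum>a''\<in>Ar. W3 a a'' * W1 a'' a') = idm Ar a a'"
  shows "tr1 (mm C (mm C (prodop W1 W2) Y) (prodop W3 W4)) = mm Bb (mm Bb W2 (tr1 Y)) W4"
proof -
  { fix b b' assume bb: "b \<in> Bb" "b' \<in> Bb"
    define f where "f = (\<lambda>a d d'. W1 a (p d) * W2 b (q d) * Y d d' * (W3 (p d') a * W4 (q d') b'))"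
    have "tr1 (mm C (mm C (prodop W1 W2) Y) (prodop W3 W4)) b b' = (\<Sum>a\<in>Ar. \<Sum>d'\<in>C. \<Sum>d\<in>C. f a d d')"
      using bb by (simp add: tr1_def mm_def prodop_def m_in p_m q_m f_def sum_distrib_right cong: sum.cong)
    also have "\<dots> = (\<Sum>d'\<in>C. \<Sum>a\<in>Ar. \<Sum>d\<in>C. f a d d')" by (rule sum.swap)
    also have "\<dots> = (\<Sum>d'\<in>C. \<Sum>d\<in>C. \<Sum>a\<in>Ar. f a d d')" by (intro sum.cong refl) (rule sum.swap)
    also have "\<dots> = (\<Sum>d\<in>C. \<Sum>d'\<in>C. \<Sum>a\<in>Ar. f a d d')" by (rule sum.swap)
    also have "\<dots> = (\<Sum>d\<in>C. \<Sum>d'\<in>C. idm Ar (p d') (p d) * (W2 b (q d) * Y d d' * W4 (q d') b'))"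
    proof (intro sum.cong refl)
      fix d d' assume d: "d \<in> C" "d' \<in> C"
      have "(\<Sum>a\<in>Ar. f a d d') = (\<Sum>a\<in>Ar. W3 (p d') a * W1 a (p d)) * (W2 b (q d) * Y d d' * W4 (q d') b')"
        by (simp add: f_def sum_distrib_right sum_distrib_left mult_ac)
      also have "\<dots> = idm Ar (p d') (p d) * (W2 b (q d) * Y d d' * W4 (q d') b')"
        using inv[OF p_in[OF d(2)] p_in[OF d(1)]] by simp
      finally show "(\<Sum>a\<in>Ar. f a d d') = idm Ar (p d') (p d) * (W2 b (q d) * Y d d' * W4 (q d') b')" .
    qed
    also have "\<dots> = (\<Sum>a1\<in>Ar. \<Sum>b1\<in>Bb. \<Sum>a2\<in>Ar. \<Sum>b2\<in>Bb. (if a2 = a1 then W2 b b1 * Y (m a1 b1) (m a2 b2) * W4 b2 b' else 0))"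
      by (simp add: sum_split p_m q_m idm_def cong: sum.cong) (intro sum.cong refl, simp)
    also have "\<dots> = (\<Sum>a1\<in>Ar. \<Sum>b1\<in>Bb. \<Sum>b2\<in>Bb. W2 b b1 * Y (m a1 b1) (m a1 b2) * W4 b2 b')"
    proof (intro sum.cong refl)
      fix a1 b1 assume a1: "a1 \<in> Ar"
      have "(\<Sum>a2\<in>Ar. \<Sum>b2\<in>Bb. (if a2 = a1 then W2 b b1 * Y (m a1 b1) (m a2 b2) * W4 b2 b' else 0))
          = (\<Sum>a2\<in>Ar. if a2 = a1 then (\<Sum>b2\<in>Bb. W2 b b1 * Y (m a1 b1) (m a2 b2) * W4 b2 b') else 0)"
        by (intro sum.cong refl) auto
      also have "\<dots> = (\<Sum>b2\<in>Bb. W2 b b1 * Y (m a1 b1) (m a1 b2) * W4 b2 b')"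
        using a1 finAr by simp
      finally show "(\<Sum>a2\<in>Ar. \<Sum>b2\<in>Bb. (if a2 = a1 then W2 b b1 * Y (m a1 b1) (m a2 b2) * W4 b2 b' else 0))
          = (\<Sum>b2\<in>Bb. W2 b b1 * Y (m a1 b1) (m a1 b2) * W4 b2 b')" .
    qed
    also have "\<dots> = (\<Sum>b1\<in>Bb. \<Sum>a1\<in>Ar. \<Sum>b2\<in>Bb. W2 b b1 * Y (m a1 b1) (m a1 b2) * W4 b2 b')" by (rule sum.swap)
    also have "\<dots> = (\<Sum>b1\<in>Bb. \<Sum>b2\<in>Bb. \<Sum>a1\<in>Ar. W2 b b1 * Y (m a1 b1) (m a1 b2) * W4 b2 b')" by (intro sum.cong refl) (rule sum.swap)
    also have "\<dots> = (\<Sum>b2\<in>Bb. \<Sum>b1\<in>Bb. \<Sum>a1\<in>Ar. W2 b b1 * Y (m a1 b1) (m a1 b2) * W4 b2 b')" by (rule sum.swap)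
    also have "\<dots> = mm Bb (mm Bb W2 (tr1 Y)) W4 b b'"
      using bb by (simp add: mm_def tr1_def sum_distrib_left sum_distrib_right mult_ac cong: sum.cong)
    finally have "tr1 (mm C (mm C (prodop W1 W2) Y) (prodop W3 W4)) b b' = mm Bb (mm Bb W2 (tr1 Y)) W4 b b'" . }
  then show ?thesis by (auto simp: fun_eq_iff tr1_def mm_def)
qed

end


lemma uv_le: "0 \<le> u \<Longrightarrow> 0 \<le> v \<Longrightarrow> u * v \<le> u\<^sup>2 + (v::real)\<^sup>2"
proof (cases "u \<le> v")
  case True
  assume "0 \<le> u" "0 \<le> v"
  then have "u * v \<le> v * v" using True by (intro mult_right_mono) auto
  then show ?thesis by (simp add: power2_eq_square) (smt (verit) \<open>0 \<le> u\<close> mult_nonneg_nonneg)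
next
  case False
  assume "0 \<le> u" "0 \<le> v"
  then have "u * v \<le> u * u" using False by (intro mult_left_mono) auto
  then show ?thesis by (simp add: power2_eq_square) (smt (verit) \<open>0 \<le> v\<close> mult_nonneg_nonneg)
qed

lemma cnj_meas: "f \<in> borel_measurable M \<Longrightarrow> (\<lambda>x. cnj (f x)) \<in> borel_measurable M"
proof -
  have "(cnj :: complex \<Rightarrow> complex) \<in> borel_measurable borel"
    by (rule borel_measurable_continuous_onI) (intro continuous_intros)
  then show "f \<in> borel_measurable M \<Longrightarrow> (\<lambda>x. cnj (f x)) \<in> borel_measurable M"
    using measurable_compose by blast
qed

locale haarL =
  fixes \<mu> :: "'g::{topological_group_add, t2_space, second_countable_topology} measure"
  assumes haar: "haar_measure \<mu>"
begin

lemma sets_mu: "sets \<mu> = sets borel" using haar by (simp add: haar_measure_def)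
lemma space_mu: "space \<mu> = UNIV" using sets_eq_imp_space_eq[OF sets_mu] by simp
lemma prob: "prob_space \<mu>" using haar by (simp add: haar_measure_def)
lemma distr_left: "distr \<mu> \<mu> (\<lambda>x. h + x) = \<mu>" using haar by (simp add: haar_measure_def)
lemma distr_right: "distr \<mu> \<mu> (\<lambda>x. x + h) = \<mu>" using haar by (simp add: haar_measure_def)

interpretation P: prob_space \<mu> by (rule prob)

lemma meas_iff: "measurable \<mu> N = measurable borel N"
  by (rule measurable_cong_sets[OF sets_mu refl])

lemma meas_iff2: "measurable \<mu> \<mu> = measurable borel borel"
  by (rule measurable_cong_sets[OF sets_mu sets_mu])

lemma cont_meas: "continuous_on UNIV (f :: 'g \<Rightarrow> 'b::topological_space) \<Longrightarrow> f \<in> borel_measurable \<mu>"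
  unfolding meas_iff by (rule borel_measurable_continuous_onI)

lemma T_left: "(\<lambda>x. h + x) \<in> measurable \<mu> \<mu>"
  unfolding meas_iff2 by (rule borel_measurable_continuous_onI) (intro continuous_intros)

lemma T_right: "(\<lambda>x. x + h) \<in> measurable \<mu> \<mu>"
  unfolding meas_iff2 by (rule borel_measurable_continuous_onI) (intro continuous_intros)

lemma comp_left: "f \<in> borel_measurable \<mu> \<Longrightarrow> (\<lambda>x. f (h + x)) \<in> borel_measurable \<mu>"
  using measurable_compose[OF T_left] by blast

lemma comp_right: "f \<in> borel_measurable \<mu> \<Longrightarrow> (\<lambda>x. f (x + h)) \<in> borel_measurable \<mu>"
  using measurable_compose[OF T_right] by blast

lemma int_left:
  fixes f :: "'g \<Rightarrow> complex"
  assumes "f \<in> borel_measurable \<mu>"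
  shows "(LINT x|\<mu>. f (h + x)) = (LINT x|\<mu>. f x)"
  using integral_distr[OF T_left assms, of h] distr_left by simp

lemma int_right:
  fixes f :: "'g \<Rightarrow> complex"
  assumes "f \<in> borel_measurable \<mu>"
  shows "(LINT x|\<mu>. f (x + h)) = (LINT x|\<mu>. f x)"
  using integral_distr[OF T_right assms, of h] distr_right by simp

lemma integ_left:
  fixes f :: "'g \<Rightarrow> 'b::{banach, second_countable_topology}"
  assumes "f \<in> borel_measurable \<mu>" "integrable \<mu> f"
  shows "integrable \<mu> (\<lambda>x. f (h + x))"
  using integrable_distr_eq[OF T_left assms(1), of h] distr_left assms(2) by simp

lemma integ_right:
  fixes f :: "'g \<Rightarrow> 'b::{banach, second_countable_topology}"
  assumes "f \<in> borel_measurable \<mu>" "integrable \<mu> f"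
  shows "integrable \<mu> (\<lambda>x. f (x + h))"
  using integrable_distr_eq[OF T_right assms(1), of h] distr_right assms(2) by simp

lemma AE_left: assumes "AE x in \<mu>. P x" shows "AE x in \<mu>. P (h + x)"
proof -
  have "AE x in distr \<mu> \<mu> (\<lambda>x. h + x). P x" by (subst distr_left) (rule assms)
  then show ?thesis by (rule AE_distrD[OF T_left])
qed

lemma AE_right: assumes "AE x in \<mu>. P x" shows "AE x in \<mu>. P (x + h)"
proof -
  have "AE x in distr \<mu> \<mu> (\<lambda>x. x + h). P x" by (subst distr_right) (rule assms)
  then show ?thesis by (rule AE_distrD[OF T_right])
qed

lemma int_cnj_prod:
  fixes a b :: "'g \<Rightarrow> complex"
  assumes am: "a \<in> borel_measurable \<mu>" and bm: "b \<in> borel_measurable \<mu>"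
    and ai: "integrable \<mu> (\<lambda>x. (cmod (a x))\<^sup>2)" and bi: "integrable \<mu> (\<lambda>x. (cmod (b x))\<^sup>2)"
  shows "integrable \<mu> (\<lambda>x. cnj (a x) * b x)"
proof (rule Bochner_Integration.integrable_bound[where f="\<lambda>x. (cmod (a x))\<^sup>2 + (cmod (b x))\<^sup>2"])
  show "integrable \<mu> (\<lambda>x. (cmod (a x))\<^sup>2 + (cmod (b x))\<^sup>2)" using ai bi by simp
  show "(\<lambda>x. cnj (a x) * b x) \<in> borel_measurable \<mu>" by (intro borel_measurable_times cnj_meas am bm)
  show "AE x in \<mu>. norm (cnj (a x) * b x) \<le> norm ((cmod (a x))\<^sup>2 + (cmod (b x))\<^sup>2)"
  proof (rule AE_I2)
    fix x
    have "cmod (a x) * cmod (b x) \<le> (cmod (a x))\<^sup>2 + (cmod (b x))\<^sup>2"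
      by (rule uv_le) simp_all
    then show "norm (cnj (a x) * b x) \<le> norm ((cmod (a x))\<^sup>2 + (cmod (b x))\<^sup>2)"
      by (simp add: norm_mult)
  qed
qed

end


locale l2b = haarL +
  fixes N :: nat and f :: "nat \<Rightarrow> 'g::{topological_group_add, t2_space, second_countable_topology} \<Rightarrow> complex"
  assumes basis: "L2_trunc_basis \<mu> N f"
begin

interpretation P: prob_space \<mu> by (rule prob)

lemma fm: "i < N \<Longrightarrow> f i \<in> borel_measurable \<mu>" using basis by (simp add: L2_trunc_basis_def)
lemma fsq: "i < N \<Longrightarrow> integrable \<mu> (\<lambda>x. (cmod (f i x))\<^sup>2)" using basis by (simp add: L2_trunc_basis_def)
lemma orth: "i < N \<Longrightarrow> j < N \<Longrightarrow> (LINT x|\<mu>. cnj (f i x) * f j x) = kdelta i j"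
  using basis by (simp add: L2_trunc_basis_def)

lemma fsq_m: "i < N \<Longrightarrow> (\<lambda>x. (cmod (f i x))\<^sup>2) \<in> borel_measurable \<mu>"
  using fm by measurable

lemma fm_l: "i < N \<Longrightarrow> (\<lambda>x. f i (h + x)) \<in> borel_measurable \<mu>" using fm comp_left by blast
lemma fm_r: "i < N \<Longrightarrow> (\<lambda>x. f i (x + h)) \<in> borel_measurable \<mu>" using fm comp_right by blast
lemma fsq_l: "i < N \<Longrightarrow> integrable \<mu> (\<lambda>x. (cmod (f i (h + x)))\<^sup>2)"
  using integ_left[OF fsq_m fsq] by blast
lemma fsq_r: "i < N \<Longrightarrow> integrable \<mu> (\<lambda>x. (cmod (f i (x + h)))\<^sup>2)"
  using integ_right[OF fsq_m fsq] by blast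

lemma int00: "i < N \<Longrightarrow> j < N \<Longrightarrow> integrable \<mu> (\<lambda>x. cnj (f i x) * f j x)"
  by (rule int_cnj_prod[OF fm fm fsq fsq])
lemma int0l: "i < N \<Longrightarrow> j < N \<Longrightarrow> integrable \<mu> (\<lambda>x. cnj (f i x) * f j (h + x))"
  by (rule int_cnj_prod[OF fm fm_l fsq fsq_l])
lemma int0r: "i < N \<Longrightarrow> j < N \<Longrightarrow> integrable \<mu> (\<lambda>x. cnj (f i x) * f j (x + h))"
  by (rule int_cnj_prod[OF fm fm_r fsq fsq_r])

lemma coef_ident:
  assumes j: "k < N" and a: "AE x in \<mu>. F x = (\<Sum>i<N. a i * f i x)" and Fm: "F \<in> borel_measurable \<mu>"
  shows "(LINT x|\<mu>. cnj (f k x) * F x) = a k"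
proof -
  have "(LINT x|\<mu>. cnj (f k x) * F x) = (LINT x|\<mu>. cnj (f k x) * (\<Sum>i<N. a i * f i x))"
  proof (rule integral_cong_AE)
    show "(\<lambda>x. cnj (f k x) * F x) \<in> borel_measurable \<mu>" by (intro borel_measurable_times cnj_meas fm[OF j] Fm)
    show "(\<lambda>x. cnj (f k x) * (\<Sum>i<N. a i * f i x)) \<in> borel_measurable \<mu>"
      by (intro borel_measurable_times cnj_meas fm[OF j] borel_measurable_sum borel_measurable_const fm) auto
    show "AE x in \<mu>. cnj (f k x) * F x = cnj (f k x) * (\<Sum>i<N. a i * f i x)" using a by eventually_elim simp
  qed
  also have "\<dots> = (LINT x|\<mu>. (\<Sum>i<N. a i * (cnj (f k x) * f i x)))"
    by (simp add: sum_distrib_left mult_ac)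
  also have "\<dots> = (\<Sum>i<N. a i * (LINT x|\<mu>. cnj (f k x) * f i x))"
    using int00[OF j] by (simp add: integral_sum)
  also have "\<dots> = (\<Sum>i<N. a i * kdelta k i)" using orth[OF j] by simp
  also have "\<dots> = a k" using j by (simp add: kdelta_def if_distrib cong: if_cong)
  finally show ?thesis .
qed

lemma Lcoef: "j < N \<Longrightarrow> AE x in \<mu>. f j (- g + x) = (\<Sum>i<N. Lmat \<mu> f g i j * f i x)"
proof -
  assume j: "j < N"
  have "\<exists>a. AE x in \<mu>. f j (- g + x) = (\<Sum>i<N. a i * f i x)"
    using basis j unfolding L2_trunc_basis_def by blast
  then obtain a where a: "AE x in \<mu>. f j (- g + x) = (\<Sum>i<N. a i * f i x)" by blast
  have coefs: "Lmat \<mu> f g k j = a k" if "k < N" for k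
    unfolding Lmat_def by (rule coef_ident[OF that a fm_l[OF j]])
  from a show ?thesis by (rule eventually_mono) (simp add: coefs)
qed

lemma Rcoef: "j < N \<Longrightarrow> AE x in \<mu>. f j (x + g) = (\<Sum>i<N. Rinvmat \<mu> f g i j * f i x)"
proof -
  assume j: "j < N"
  have "\<exists>a. AE x in \<mu>. f j (x + g) = (\<Sum>i<N. a i * f i x)"
    using basis j unfolding L2_trunc_basis_def by blast
  then obtain a where a: "AE x in \<mu>. f j (x + g) = (\<Sum>i<N. a i * f i x)" by blast
  have coefs: "Rinvmat \<mu> f g k j = a k" if "k < N" for k
    unfolding Rinvmat_def by (rule coef_ident[OF that a fm_r[OF j]])
  from a show ?thesis by (rule eventually_mono) (simp add: coefs)
qed


lemma int_left_r:
  fixes F :: "'g \<Rightarrow> real"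
  assumes "F \<in> borel_measurable \<mu>"
  shows "(LINT x|\<mu>. F (h + x)) = (LINT x|\<mu>. F x)"
  using integral_distr[OF T_left assms, of h] distr_left by simp

lemma L0: "i < N \<Longrightarrow> j < N \<Longrightarrow> Lmat \<mu> f 0 i j = kdelta i j"
  by (simp add: Lmat_def orth)

lemma R0: "i < N \<Longrightarrow> j < N \<Longrightarrow> Rinvmat \<mu> f 0 i j = kdelta i j"
  by (simp add: Rinvmat_def orth)

lemma m_cl: "i < N \<Longrightarrow> j < N \<Longrightarrow> (\<lambda>x. cnj (f i x) * f j (h + x)) \<in> borel_measurable \<mu>"
  by (intro borel_measurable_times cnj_meas fm fm_l)

lemma m_cr: "i < N \<Longrightarrow> j < N \<Longrightarrow> (\<lambda>x. cnj (f i x) * f j (x + h)) \<in> borel_measurable \<mu>"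
  by (intro borel_measurable_times cnj_meas fm fm_r)

lemma m_sum_l: "i < N \<Longrightarrow> (\<lambda>x. cnj (f i x) * (\<Sum>k<N. c k * f k (h + x))) \<in> borel_measurable \<mu>"
  by (intro borel_measurable_times cnj_meas fm borel_measurable_sum borel_measurable_const fm_l) auto

lemma m_sum_r: "i < N \<Longrightarrow> (\<lambda>x. cnj (f i x) * (\<Sum>k<N. c k * f k (x + h))) \<in> borel_measurable \<mu>"
  by (intro borel_measurable_times cnj_meas fm borel_measurable_sum borel_measurable_const fm_r) auto

lemma int_sum_l: "i < N \<Longrightarrow> (LINT x|\<mu>. cnj (f i x) * (\<Sum>k<N. c k * f k (h + x))) = (\<Sum>k<N. c k * (LINT x|\<mu>. cnj (f i x) * f k (h + x)))"
proof -
  assume i: "i < N"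
  have "(LINT x|\<mu>. cnj (f i x) * (\<Sum>k<N. c k * f k (h + x))) = (LINT x|\<mu>. (\<Sum>k<N. c k * (cnj (f i x) * f k (h + x))))"
    by (simp add: sum_distrib_left mult_ac)
  also have "\<dots> = (\<Sum>k<N. c k * (LINT x|\<mu>. cnj (f i x) * f k (h + x)))"
    using int0l[OF i] by (simp add: integral_sum)
  finally show ?thesis .
qed

lemma int_sum_r: "i < N \<Longrightarrow> (LINT x|\<mu>. cnj (f i x) * (\<Sum>k<N. c k * f k (x + h))) = (\<Sum>k<N. c k * (LINT x|\<mu>. cnj (f i x) * f k (x + h)))"
proof -
  assume i: "i < N"
  have "(LINT x|\<mu>. cnj (f i x) * (\<Sum>k<N. c k * f k (x + h))) = (LINT x|\<mu>. (\<Sum>k<N. c k * (cnj (f i x) * f k (x + h))))"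
    by (simp add: sum_distrib_left mult_ac)
  also have "\<dots> = (\<Sum>k<N. c k * (LINT x|\<mu>. cnj (f i x) * f k (x + h)))"
    using int0r[OF i] by (simp add: integral_sum)
  finally show ?thesis .
qed

lemma Lhom: assumes i: "i < N" and j: "j < N"
  shows "(\<Sum>k<N. Lmat \<mu> f g i k * Lmat \<mu> f h k j) = Lmat \<mu> f (g + h) i j"
proof -
  have ae: "AE x in \<mu>. f j (- h + (- g + x)) = (\<Sum>k<N. Lmat \<mu> f h k j * f k (- g + x))"
    using AE_left[OF Lcoef[OF j, of h], of "- g"] .
  have e: "\<And>x. - (g + h) + x = - h + (- g + x)" by (simp only: minus_add add.assoc)
  have "Lmat \<mu> f (g + h) i j = (LINT x|\<mu>. cnj (f i x) * f j (- h + (- g + x)))"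
    unfolding Lmat_def e ..
  also have "\<dots> = (LINT x|\<mu>. cnj (f i x) * (\<Sum>k<N. Lmat \<mu> f h k j * f k (- g + x)))"
  proof (rule integral_cong_AE)
    have "(\<lambda>x. f j (- h + (- g + x))) \<in> borel_measurable \<mu>"
      using comp_left[OF fm_l[OF j, of "- h"], of "- g"] by simp
    then show "(\<lambda>x. cnj (f i x) * f j (- h + (- g + x))) \<in> borel_measurable \<mu>"
      by (intro borel_measurable_times cnj_meas fm[OF i])
    show "(\<lambda>x. cnj (f i x) * (\<Sum>k<N. Lmat \<mu> f h k j * f k (- g + x))) \<in> borel_measurable \<mu>"
      by (rule m_sum_l[OF i])
    show "AE x in \<mu>. cnj (f i x) * f j (- h + (- g + x)) = cnj (f i x) * (\<Sum>k<N. Lmat \<mu> f h k j * f k (- g + x))"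
      using ae by (rule eventually_mono) simp
  qed
  also have "\<dots> = (\<Sum>k<N. Lmat \<mu> f h k j * Lmat \<mu> f g i k)"
    by (simp add: int_sum_l[OF i] Lmat_def)
  finally show ?thesis by (simp add: mult.commute)
qed


lemma int_right_r:
  fixes F :: "'g \<Rightarrow> real"
  assumes "F \<in> borel_measurable \<mu>"
  shows "(LINT x|\<mu>. F (x + h)) = (LINT x|\<mu>. F x)"
  using integral_distr[OF T_right assms, of h] distr_right by simp

lemma Rhom: assumes i: "i < N" and j: "j < N"
  shows "(\<Sum>k<N. Rinvmat \<mu> f g i k * Rinvmat \<mu> f h k j) = Rinvmat \<mu> f (g + h) i j"
proof -
  have ae: "AE x in \<mu>. f j ((x + g) + h) = (\<Sum>k<N. Rinvmat \<mu> f h k j * f k (x + g))"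
    using AE_right[OF Rcoef[OF j, of h], of g] .
  have e: "\<And>x. x + (g + h) = (x + g) + h" by (simp only: add.assoc)
  have "Rinvmat \<mu> f (g + h) i j = (LINT x|\<mu>. cnj (f i x) * f j ((x + g) + h))"
    unfolding Rinvmat_def e ..
  also have "\<dots> = (LINT x|\<mu>. cnj (f i x) * (\<Sum>k<N. Rinvmat \<mu> f h k j * f k (x + g)))"
  proof (rule integral_cong_AE)
    have "(\<lambda>x. f j ((x + g) + h)) \<in> borel_measurable \<mu>"
      using comp_right[OF fm_r[OF j, of h], of g] by simp
    then show "(\<lambda>x. cnj (f i x) * f j ((x + g) + h)) \<in> borel_measurable \<mu>"
      by (intro borel_measurable_times cnj_meas fm[OF i])
    show "(\<lambda>x. cnj (f i x) * (\<Sum>k<N. Rinvmat \<mu> f h k j * f k (x + g))) \<in> borel_measurable \<mu>"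
      by (rule m_sum_r[OF i])
    show "AE x in \<mu>. cnj (f i x) * f j ((x + g) + h) = cnj (f i x) * (\<Sum>k<N. Rinvmat \<mu> f h k j * f k (x + g))"
      using ae by (rule eventually_mono) simp
  qed
  also have "\<dots> = (\<Sum>k<N. Rinvmat \<mu> f h k j * Rinvmat \<mu> f g i k)"
    by (simp add: int_sum_r[OF i] Rinvmat_def)
  finally show ?thesis by (simp add: mult.commute)
qed

lemma Ladj: assumes i: "i < N" and j: "j < N"
  shows "cnj (Lmat \<mu> f g j i) = Lmat \<mu> f (- g) i j"
proof -
  define F where "F = (\<lambda>x. f j x * cnj (f i (- g + x)))"
  have Fm: "F \<in> borel_measurable \<mu>" unfolding F_def by (intro borel_measurable_times cnj_meas fm_l fm i j)
  have "cnj (Lmat \<mu> f g j i) = (LINT x|\<mu>. F x)"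
    unfolding Lmat_def F_def by (subst Bochner_Integration.integral_cnj[symmetric]) (simp add: mult.commute)
  also have "\<dots> = (LINT x|\<mu>. F (g + x))" by (rule int_left[OF Fm, symmetric])
  also have "\<dots> = Lmat \<mu> f (- g) i j"
    unfolding Lmat_def F_def by (simp add: minus_add_cancel mult.commute)
  finally show ?thesis .
qed

lemma Radj: assumes i: "i < N" and j: "j < N"
  shows "cnj (Rinvmat \<mu> f g j i) = Rinvmat \<mu> f (- g) i j"
proof -
  define F where "F = (\<lambda>x. f j x * cnj (f i (x + g)))"
  have Fm: "F \<in> borel_measurable \<mu>" unfolding F_def by (intro borel_measurable_times cnj_meas fm_r fm i j)
  have "cnj (Rinvmat \<mu> f g j i) = (LINT x|\<mu>. F x)"
    unfolding Rinvmat_def F_def by (subst Bochner_Integration.integral_cnj[symmetric]) (simp add: mult.commute)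
  also have "\<dots> = (LINT x|\<mu>. F (x + - g))" by (rule int_right[OF Fm, symmetric])
  also have "\<dots> = Rinvmat \<mu> f (- g) i j"
    unfolding Rinvmat_def F_def by (simp add: mult.commute)
  finally show ?thesis .
qed

lemma LRcomm: assumes i: "i < N" and j: "j < N"
  shows "(\<Sum>k<N. Lmat \<mu> f g i k * Rinvmat \<mu> f h k j) = (\<Sum>k<N. Rinvmat \<mu> f h i k * Lmat \<mu> f g k j)"
proof -
  have ae1: "AE x in \<mu>. f j ((- g + x) + h) = (\<Sum>k<N. Rinvmat \<mu> f h k j * f k (- g + x))"
    using AE_left[OF Rcoef[OF j, of h], of "- g"] .
  have ae2: "AE x in \<mu>. f j (- g + (x + h)) = (\<Sum>k<N. Lmat \<mu> f g k j * f k (x + h))"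
    using AE_right[OF Lcoef[OF j, of g], of h] .
  have m1: "(\<lambda>x. f j ((- g + x) + h)) \<in> borel_measurable \<mu>"
    using comp_left[OF fm_r[OF j, of h], of "- g"] by simp
  have m2: "(\<lambda>x. f j (- g + (x + h))) \<in> borel_measurable \<mu>"
    using comp_right[OF fm_l[OF j, of "- g"], of h] by simp
  have "(\<Sum>k<N. Lmat \<mu> f g i k * Rinvmat \<mu> f h k j) = (LINT x|\<mu>. cnj (f i x) * (\<Sum>k<N. Rinvmat \<mu> f h k j * f k (- g + x)))"
    by (simp add: int_sum_l[OF i] Lmat_def mult.commute)
  also have "\<dots> = (LINT x|\<mu>. cnj (f i x) * f j ((- g + x) + h))"
  proof (rule integral_cong_AE)
    show "(\<lambda>x. cnj (f i x) * f j ((- g + x) + h)) \<in> borel_measurable \<mu>"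
      by (intro borel_measurable_times cnj_meas fm[OF i] m1)
    show "(\<lambda>x. cnj (f i x) * (\<Sum>k<N. Rinvmat \<mu> f h k j * f k (- g + x))) \<in> borel_measurable \<mu>"
      by (rule m_sum_l[OF i])
    show "AE x in \<mu>. cnj (f i x) * (\<Sum>k<N. Rinvmat \<mu> f h k j * f k (- g + x)) = cnj (f i x) * f j ((- g + x) + h)"
      using ae1 by (rule eventually_mono) simp
  qed
  also have "\<dots> = (LINT x|\<mu>. cnj (f i x) * f j (- g + (x + h)))"
    by (simp only: add.assoc)
  also have "\<dots> = (LINT x|\<mu>. cnj (f i x) * (\<Sum>k<N. Lmat \<mu> f g k j * f k (x + h)))"
  proof (rule integral_cong_AE)
    show "(\<lambda>x. cnj (f i x) * f j (- g + (x + h))) \<in> borel_measurable \<mu>"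
      by (intro borel_measurable_times cnj_meas fm[OF i] m2)
    show "(\<lambda>x. cnj (f i x) * (\<Sum>k<N. Lmat \<mu> f g k j * f k (x + h))) \<in> borel_measurable \<mu>"
      by (rule m_sum_r[OF i])
    show "AE x in \<mu>. cnj (f i x) * f j (- g + (x + h)) = cnj (f i x) * (\<Sum>k<N. Lmat \<mu> f g k j * f k (x + h))"
      using ae2 by (rule eventually_mono) simp
  qed
  also have "\<dots> = (\<Sum>k<N. Rinvmat \<mu> f h i k * Lmat \<mu> f g k j)"
    unfolding int_sum_r[OF i] Rinvmat_def by (simp add: mult.commute)
  finally show ?thesis .
qed


lemma pair_meas: "measurable (\<mu> \<Otimes>\<^sub>M \<mu>) M = measurable borel M"
proof -
  have "measurable (\<mu> \<Otimes>\<^sub>M \<mu>) M = measurable (borel \<Otimes>\<^sub>M borel) M"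
    by (rule measurable_cong_sets[OF sets_pair_measure_cong[OF sets_mu sets_mu] refl])
  then show ?thesis by (simp add: borel_prod)
qed

lemma Lmeas: assumes i: "i < N" and j: "j < N"
  shows "(\<lambda>g. Lmat \<mu> f g i j) \<in> borel_measurable \<mu>"
proof -
  have fi: "f i \<in> borel_measurable borel" and fj: "f j \<in> borel_measurable borel"
    using fm[OF i] fm[OF j] by (simp_all add: meas_iff)
  have c1: "(\<lambda>z::'g \<times> 'g. snd z) \<in> borel_measurable borel"
    by (rule borel_measurable_continuous_onI) (intro continuous_intros)
  have c2: "(\<lambda>z::'g \<times> 'g. - fst z + snd z) \<in> borel_measurable borel"
    by (rule borel_measurable_continuous_onI) (intro continuous_intros)
  have "(\<lambda>z::'g \<times> 'g. cnj (f i (snd z)) * f j (- fst z + snd z)) \<in> borel_measurable borel"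
    by (intro borel_measurable_times cnj_meas measurable_compose[OF c1 fi] measurable_compose[OF c2 fj])
  then have "case_prod (\<lambda>g x. cnj (f i x) * f j (- g + x)) \<in> borel_measurable (\<mu> \<Otimes>\<^sub>M \<mu>)"
    unfolding pair_meas by (simp add: case_prod_beta)
  then show ?thesis unfolding Lmat_def by (rule P.borel_measurable_lebesgue_integral)
qed

lemma Rmeas: assumes i: "i < N" and j: "j < N"
  shows "(\<lambda>g. Rinvmat \<mu> f g i j) \<in> borel_measurable \<mu>"
proof -
  have fi: "f i \<in> borel_measurable borel" and fj: "f j \<in> borel_measurable borel"
    using fm[OF i] fm[OF j] by (simp_all add: meas_iff)
  have c1: "(\<lambda>z::'g \<times> 'g. snd z) \<in> borel_measurable borel"
    by (rule borel_measurable_continuous_onI) (intro continuous_intros)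
  have c2: "(\<lambda>z::'g \<times> 'g. snd z + fst z) \<in> borel_measurable borel"
    by (rule borel_measurable_continuous_onI) (intro continuous_intros)
  have "(\<lambda>z::'g \<times> 'g. cnj (f i (snd z)) * f j (snd z + fst z)) \<in> borel_measurable borel"
    by (intro borel_measurable_times cnj_meas measurable_compose[OF c1 fi] measurable_compose[OF c2 fj])
  then have "case_prod (\<lambda>g x. cnj (f i x) * f j (x + g)) \<in> borel_measurable (\<mu> \<Otimes>\<^sub>M \<mu>)"
    unfolding pair_meas by (simp add: case_prod_beta)
  then show ?thesis unfolding Rinvmat_def by (rule P.borel_measurable_lebesgue_integral)
qed

lemma gen_bound:
  assumes i: "i < N" and j: "j < N" and Gm: "G \<in> borel_measurable \<mu>"
    and Gsq: "integrable \<mu> (\<lambda>x. (cmod (G x))\<^sup>2)" and Gi: "(LINT x|\<mu>. (cmod (G x))\<^sup>2) = (LINT x|\<mu>. (cmod (f j x))\<^sup>2)"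
  shows "cmod (LINT x|\<mu>. cnj (f i x) * G x) \<le> (LINT x|\<mu>. (cmod (f i x))\<^sup>2) + (LINT x|\<mu>. (cmod (f j x))\<^sup>2)"
proof -
  have "cmod (LINT x|\<mu>. cnj (f i x) * G x) \<le> (LINT x|\<mu>. cmod (cnj (f i x) * G x))"
    by (rule integral_norm_bound)
  also have "\<dots> \<le> (LINT x|\<mu>. (cmod (f i x))\<^sup>2 + (cmod (G x))\<^sup>2)"
  proof (rule integral_mono)
    show "integrable \<mu> (\<lambda>x. cmod (cnj (f i x) * G x))"
      by (intro integrable_norm int_cnj_prod fm[OF i] Gm fsq[OF i] Gsq)
    show "integrable \<mu> (\<lambda>x. (cmod (f i x))\<^sup>2 + (cmod (G x))\<^sup>2)"
      using fsq[OF i] Gsq by simp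
    fix x show "cmod (cnj (f i x) * G x) \<le> (cmod (f i x))\<^sup>2 + (cmod (G x))\<^sup>2"
      by (simp add: norm_mult uv_le)
  qed
  also have "\<dots> = (LINT x|\<mu>. (cmod (f i x))\<^sup>2) + (LINT x|\<mu>. (cmod (f j x))\<^sup>2)"
    using fsq[OF i] Gsq Gi by simp
  finally show ?thesis .
qed

lemma Lbound: assumes i: "i < N" and j: "j < N"
  shows "cmod (Lmat \<mu> f g i j) \<le> (LINT x|\<mu>. (cmod (f i x))\<^sup>2) + (LINT x|\<mu>. (cmod (f j x))\<^sup>2)"
  unfolding Lmat_def
  by (rule gen_bound[OF i j fm_l[OF j] fsq_l[OF j]]) (rule int_left_r[OF fsq_m[OF j]])

lemma Rbound: assumes i: "i < N" and j: "j < N"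
  shows "cmod (Rinvmat \<mu> f g i j) \<le> (LINT x|\<mu>. (cmod (f i x))\<^sup>2) + (LINT x|\<mu>. (cmod (f j x))\<^sup>2)"
  unfolding Rinvmat_def
  by (rule gen_bound[OF i j fm_r[OF j] fsq_r[OF j]]) (rule int_right_r[OF fsq_m[OF j]])

end


definition rst :: "nat \<Rightarrow> (nat \<Rightarrow> nat \<Rightarrow> complex) \<Rightarrow> nat mat" where
  "rst N A = (\<lambda>i j. if i < N \<and> j < N then A i j else 0)"

lemma mm_rst: "mm {..<N} (rst N A) (rst N B) = rst N (\<lambda>i j. \<Sum>k<N. A i k * B k j)"
  by (auto simp: mm_def rst_def fun_eq_iff intro!: sum.cong)

lemma rst_kdelta: "rst N kdelta = idm {..<N}"
  by (auto simp: rst_def idm_def kdelta_def fun_eq_iff)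

lemma adj_rst: "adj (rst N A) = rst N (\<lambda>i j. cnj (A j i))"
  by (auto simp: adj_def rst_def fun_eq_iff)

lemma rst_eq: "(\<And>i j. i < N \<Longrightarrow> j < N \<Longrightarrow> A i j = B i j) \<Longrightarrow> rst N A = rst N B"
  by (auto simp: rst_def fun_eq_iff)

lemma zo_rst[simp]: "zo {..<N} (rst N A)"
  by (simp add: zo_def rst_def)

definition grp :: "'c set \<Rightarrow> ('g::group_add \<Rightarrow> 'c mat) \<Rightarrow> bool" where
  "grp K W \<longleftrightarrow> (\<forall>g h. mm K (W g) (W h) = W (g + h)) \<and> W 0 = idm K \<and> (\<forall>g. adj (W g) = W (- g)) \<and> (\<forall>g. zo K (W g))"

lemma grp_idm: "finite K \<Longrightarrow> grp K (\<lambda>_. idm K)"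
  by (simp add: grp_def mm_idm_left)

lemma sum_kdelta_l: "i < m \<Longrightarrow> (\<Sum>l<m. kdelta i l * F l) = F i"
proof -
  assume i: "i < m"
  have "(\<Sum>l<m. kdelta i l * F l) = (\<Sum>l<m. if i = l then F l else 0)"
    by (intro sum.cong) (auto simp: kdelta_def)
  then show ?thesis using i by simp
qed

lemma sum_kdelta_r: "j < m \<Longrightarrow> (\<Sum>k<m. F k * kdelta k j) = F j"
proof -
  assume j: "j < m"
  have "(\<Sum>k<m. F k * kdelta k j) = (\<Sum>k<m. if k = j then F k else 0)"
    by (intro sum.cong) (auto simp: kdelta_def)
  then show ?thesis using j by simp
qed

lemma grp_prod:
  assumes fK: "finite K" and A: "grp K A" and B: "grp K B"
    and c: "\<And>g h. mm K (A g) (B h) = mm K (B h) (A g)"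
  shows "grp K (\<lambda>g. mm K (A g) (B g))"
proof -
  have zA: "zo K (A g)" and zB: "zo K (B g)" for g using A B by (auto simp: grp_def)
  have "mm K (mm K (A g) (B g)) (mm K (A h) (B h)) = mm K (A (g + h)) (B (g + h))" for g h
  proof -
    have "mm K (mm K (A g) (B g)) (mm K (A h) (B h)) = mm K (A g) (mm K (mm K (B g) (A h)) (B h))"
      by (simp add: mm_assoc[OF fK])
    also have "\<dots> = mm K (mm K (A g) (A h)) (mm K (B g) (B h))"
      by (simp add: c[symmetric] mm_assoc[OF fK])
    also have "\<dots> = mm K (A (g + h)) (B (g + h))" using A B by (simp add: grp_def)
    finally show ?thesis .
  qed
  moreover have "mm K (A 0) (B 0) = idm K" using A B by (simp add: grp_def mm_idm_left fK)
  moreover have "adj (mm K (A g) (B g)) = mm K (A (- g)) (B (- g))" for g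
    using A B by (simp add: grp_def adj_mm c)
  ultimately show ?thesis by (simp add: grp_def)
qed

lemma comm4:
  assumes fK: "finite K"
    and c1: "mm K A1 A2 = mm K A2 A1" and c2: "mm K B1 B2 = mm K B2 B1"
    and c3: "mm K A1 B2 = mm K B2 A1" and c4: "mm K B1 A2 = mm K A2 B1"
  shows "mm K (mm K A1 B1) (mm K A2 B2) = mm K (mm K A2 B2) (mm K A1 B1)"
proof -
  have "mm K (mm K A1 B1) (mm K A2 B2) = mm K A1 (mm K (mm K B1 A2) B2)" by (simp add: mm_assoc[OF fK])
  also have "\<dots> = mm K (mm K A1 A2) (mm K B1 B2)" by (simp add: c4 mm_assoc[OF fK])
  also have "\<dots> = mm K (mm K A2 A1) (mm K B2 B1)" by (simp add: c1 c2)
  also have "\<dots> = mm K A2 (mm K (mm K A1 B2) B1)" by (simp add: mm_assoc[OF fK])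
  also have "\<dots> = mm K (mm K A2 B2) (mm K A1 B1)" by (simp add: c3 mm_assoc[OF fK])
  finally show ?thesis .
qed

lemma unitary_facts:
  assumes u: "unitary_rep m U"
  shows Uhom: "\<And>g h i j. i < m \<Longrightarrow> j < m \<Longrightarrow> (\<Sum>k<m. U g i k * U h k j) = U (g + h) i j"
    and Uunit: "\<And>g i j. i < m \<Longrightarrow> j < m \<Longrightarrow> (\<Sum>k<m. cnj (U g k i) * U g k j) = kdelta i j"
    and Ucont: "\<And>i j. i < m \<Longrightarrow> j < m \<Longrightarrow> continuous_on UNIV (\<lambda>g. U g i j)"
  using u by (auto simp: unitary_rep_def)

lemma U0:
  assumes u: "unitary_rep m U" and i: "i < m" and j: "j < m"
  shows "U 0 i j = kdelta i j"
proof -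
  have "kdelta i j = (\<Sum>k<m. cnj (U 0 k i) * U 0 k j)" using Uunit[OF u i j] by simp
  also have "\<dots> = (\<Sum>k<m. cnj (U 0 k i) * (\<Sum>l<m. U 0 k l * U 0 l j))"
    by (intro sum.cong refl) (simp add: Uhom[OF u _ j])
  also have "\<dots> = (\<Sum>l<m. (\<Sum>k<m. cnj (U 0 k i) * U 0 k l) * U 0 l j)"
    by (simp add: sum_distrib_left sum_distrib_right mult.assoc) (rule sum.swap)
  also have "\<dots> = (\<Sum>l<m. kdelta i l * U 0 l j)"
    by (intro sum.cong refl) (simp add: Uunit[OF u i])
  also have "\<dots> = U 0 i j" using i by (rule sum_kdelta_l)
  finally show ?thesis by simp
qed

lemma Uadj:
  assumes u: "unitary_rep m U" and i: "i < m" and j: "j < m"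
  shows "cnj (U g j i) = U (- g) i j"
proof -
  have "U (- g) i j = (\<Sum>l<m. kdelta i l * U (- g) l j)" using i by (rule sum_kdelta_l[symmetric])
  also have "\<dots> = (\<Sum>l<m. (\<Sum>k<m. cnj (U g k i) * U g k l) * U (- g) l j)"
    by (intro sum.cong refl) (simp add: Uunit[OF u i])
  also have "\<dots> = (\<Sum>k<m. cnj (U g k i) * (\<Sum>l<m. U g k l * U (- g) l j))"
    by (simp add: sum_distrib_left sum_distrib_right mult.assoc) (rule sum.swap)
  also have "\<dots> = (\<Sum>k<m. cnj (U g k i) * kdelta k j)"
    by (intro sum.cong refl) (simp add: Uhom[OF u _ j] U0[OF u _ j])
  also have "\<dots> = cnj (U g j i)" using j by (rule sum_kdelta_r)
  finally show ?thesis by simp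
qed

lemma Ubound:
  assumes u: "unitary_rep m U" and i: "i < m" and j: "j < m"
  shows "cmod (U g i j) \<le> 1"
proof -
  have "(\<Sum>k<m. cnj (U g k j) * U g k j) = 1" using Uunit[OF u j j] by (simp add: kdelta_def)
  moreover have "(\<Sum>k<m. cnj (U g k j) * U g k j) = of_real (\<Sum>k<m. (cmod (U g k j))\<^sup>2)"
    unfolding of_real_sum by (intro sum.cong refl) (simp add: complex_norm_square[symmetric] mult.commute)
  ultimately have "(\<Sum>k<m. (cmod (U g k j))\<^sup>2) = 1" by (metis of_real_eq_1_iff)
  moreover have "(cmod (U g i j))\<^sup>2 \<le> (\<Sum>k<m. (cmod (U g k j))\<^sup>2)"
    using i by (intro member_le_sum) auto
  ultimately have "(cmod (U g i j))\<^sup>2 \<le> 1" by simp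
  then show ?thesis by (simp add: power_le_one_iff abs_le_square_iff[symmetric] )
qed

lemma grp_U:
  assumes u: "unitary_rep m U"
  shows "grp {..<m} (\<lambda>g. rst m (U g))"
proof -
  have "mm {..<m} (rst m (U g)) (rst m (U h)) = rst m (U (g + h))" for g h
    unfolding mm_rst by (rule rst_eq) (simp add: Uhom[OF u])
  moreover have "rst m (U 0) = idm {..<m}"
    unfolding rst_kdelta[symmetric] by (rule rst_eq) (simp add: U0[OF u])
  moreover have "adj (rst m (U g)) = rst m (U (- g))" for g
    unfolding adj_rst by (rule rst_eq) (simp add: Uadj[OF u])
  ultimately show ?thesis by (simp add: grp_def)
qed


definition bm :: "'g measure \<Rightarrow> ('g \<Rightarrow> complex) \<Rightarrow> bool" where
  "bm M F \<longleftrightarrow> F \<in> borel_measurable M \<and> (\<exists>B. \<forall>g. cmod (F g) \<le> B)"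

lemma bm_const[simp]: "bm M (\<lambda>_. c)"
  by (auto simp: bm_def)

lemma bm_mult: "bm M F \<Longrightarrow> bm M G \<Longrightarrow> bm M (\<lambda>g. F g * G g)"
proof -
  assume F: "bm M F" and G: "bm M G"
  then obtain B1 B2 where b1: "\<forall>g. cmod (F g) \<le> B1" and b2: "\<forall>g. cmod (G g) \<le> B2" by (auto simp: bm_def)
  have "cmod (F g * G g) \<le> B1 * B2" for g
    unfolding norm_mult by (rule mult_mono) (use b1 b2 in \<open>auto intro: order_trans[OF norm_ge_zero]\<close>)
  then show ?thesis using F G by (auto simp: bm_def)
qed

lemma bm_add: "bm M F \<Longrightarrow> bm M G \<Longrightarrow> bm M (\<lambda>g. F g + G g)"
proof -
  assume F: "bm M F" and G: "bm M G"
  then obtain B1 B2 where b1: "\<forall>g. cmod (F g) \<le> B1" and b2: "\<forall>g. cmod (G g) \<le> B2" by (auto simp: bm_def)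
  have "cmod (F g + G g) \<le> B1 + B2" for g
    by (rule order_trans[OF norm_triangle_ineq]) (use b1 b2 in \<open>auto intro: add_mono\<close>)
  then show ?thesis using F G by (auto simp: bm_def)
qed

lemma bm_sum: "(\<And>i. i \<in> I \<Longrightarrow> bm M (F i)) \<Longrightarrow> bm M (\<lambda>g. \<Sum>i\<in>I. F i g)"
  by (induction I rule: infinite_finite_induct) (auto intro: bm_add)

lemma bm_prod: "(\<And>i. i \<in> I \<Longrightarrow> bm M (F i)) \<Longrightarrow> bm M (\<lambda>g. \<Prod>i\<in>I. F i g)"
  by (induction I rule: infinite_finite_induct) (auto intro: bm_mult)

lemma bm_cnj: "bm M F \<Longrightarrow> bm M (\<lambda>g. cnj (F g))"
  by (auto simp: bm_def intro: cnj_meas)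

lemma bm_if: "(b \<Longrightarrow> bm M F) \<Longrightarrow> (\<not> b \<Longrightarrow> bm M G) \<Longrightarrow> bm M (\<lambda>g. if b then F g else G g)"
  by (cases b) auto

lemma bm_mm: "finite K \<Longrightarrow> (\<And>i j. bm M (\<lambda>g. A g i j)) \<Longrightarrow> (\<And>i j. bm M (\<lambda>g. B g i j)) \<Longrightarrow> bm M (\<lambda>g. mm K (A g) (B g) i j)"
  unfolding mm_def by (intro bm_if bm_sum bm_mult) auto

lemma bm_integrable: "prob_space M \<Longrightarrow> bm M F \<Longrightarrow> integrable M F"
  by (auto simp: bm_def intro!: finite_measure.integrable_const_bound prob_space.finite_measure)

lemma bm_comp: "bm M F \<Longrightarrow> T \<in> measurable M M \<Longrightarrow> bm M (\<lambda>g. F (T g))"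
  by (auto simp: bm_def intro: measurable_compose)

context l2b begin

definition LLf :: "bool \<Rightarrow> 'g \<Rightarrow> nat mat" where
  "LLf b g = rst N (if b then Lmat \<mu> f g else kdelta)"

definition RRf :: "bool \<Rightarrow> 'g \<Rightarrow> nat mat" where
  "RRf b g = rst N (if b then Rinvmat \<mu> f g else kdelta)"

lemma grp_LL: "grp {..<N} (LLf b)"
proof (cases b)
  case True
  have "mm {..<N} (LLf b g) (LLf b h) = LLf b (g + h)" for g h
    unfolding LLf_def mm_rst using True by (intro rst_eq) (simp add: Lhom)
  moreover have "LLf b 0 = idm {..<N}"
    unfolding LLf_def rst_kdelta[symmetric] using True by (intro rst_eq) (simp add: L0)
  moreover have "adj (LLf b g) = LLf b (- g)" for g
    unfolding LLf_def adj_rst using True by (intro rst_eq) (simp add: Ladj)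
  ultimately show ?thesis by (simp add: grp_def LLf_def)
next
  case False
  then have "LLf b = (\<lambda>_. idm {..<N})" by (intro ext) (simp add: LLf_def rst_kdelta)
  then show ?thesis using grp_idm[of "{..<N}"] by simp
qed

lemma grp_RR: "grp {..<N} (RRf b)"
proof (cases b)
  case True
  have "mm {..<N} (RRf b g) (RRf b h) = RRf b (g + h)" for g h
    unfolding RRf_def mm_rst using True by (intro rst_eq) (simp add: Rhom)
  moreover have "RRf b 0 = idm {..<N}"
    unfolding RRf_def rst_kdelta[symmetric] using True by (intro rst_eq) (simp add: R0)
  moreover have "adj (RRf b g) = RRf b (- g)" for g
    unfolding RRf_def adj_rst using True by (intro rst_eq) (simp add: Radj)
  ultimately show ?thesis by (simp add: grp_def RRf_def)
next
  case False
  then have "RRf b = (\<lambda>_. idm {..<N})" by (intro ext) (simp add: RRf_def rst_kdelta)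
  then show ?thesis using grp_idm[of "{..<N}"] by simp
qed

lemma LR_comm: "mm {..<N} (LLf b g) (RRf b' h) = mm {..<N} (RRf b' h) (LLf b g)"
proof (cases "b \<and> b'")
  case True
  then show ?thesis unfolding LLf_def RRf_def mm_rst by (intro rst_eq) (simp add: LRcomm)
next
  case False
  then show ?thesis unfolding LLf_def RRf_def
    by (auto simp: rst_kdelta mm_idm_left mm_idm_right)
qed

lemma LL_comm: "\<not> (b \<and> b') \<Longrightarrow> mm {..<N} (LLf b g) (LLf b' h) = mm {..<N} (LLf b' h) (LLf b g)"
  unfolding LLf_def by (auto simp: rst_kdelta mm_idm_left mm_idm_right)

lemma RR_comm: "\<not> (b \<and> b') \<Longrightarrow> mm {..<N} (RRf b g) (RRf b' h) = mm {..<N} (RRf b' h) (RRf b g)"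
  unfolding RRf_def by (auto simp: rst_kdelta mm_idm_left mm_idm_right)

lemma bm_LL: "bm \<mu> (\<lambda>g. LLf b g i j)"
proof (cases "i < N \<and> j < N \<and> b")
  case True
  then have "bm \<mu> (\<lambda>g. Lmat \<mu> f g i j)" unfolding bm_def using Lmeas Lbound by blast
  then show ?thesis using True by (simp add: LLf_def rst_def)
next
  case False
  then have "(\<lambda>g. LLf b g i j) = (\<lambda>g. if i < N \<and> j < N then kdelta i j else 0)"
    by (auto simp: LLf_def rst_def)
  then show ?thesis by simp
qed

lemma bm_RR: "bm \<mu> (\<lambda>g. RRf b g i j)"
proof (cases "i < N \<and> j < N \<and> b")
  case True
  then have "bm \<mu> (\<lambda>g. Rinvmat \<mu> f g i j)" unfolding bm_def using Rmeas Rbound by blast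
  then show ?thesis using True by (simp add: RRf_def rst_def)
next
  case False
  then have "(\<lambda>g. RRf b g i j) = (\<lambda>g. if i < N \<and> j < N then kdelta i j else 0)"
    by (auto simp: RRf_def rst_def)
  then show ?thesis by simp
qed

end


definition oint :: "'g measure \<Rightarrow> ('g \<Rightarrow> 'c mat) \<Rightarrow> 'c mat" where
  "oint M F = (\<lambda>c c'. LINT g|M. F g c c')"

lemma mm_oint_left:
  assumes fC: "finite C" and int: "\<And>c c'. integrable M (\<lambda>g. F g c c')"
  shows "mm C K (oint M F) = oint M (\<lambda>g. mm C K (F g))"
proof -
  { fix c c''
    have "mm C K (oint M F) c c'' = (LINT g|M. mm C K (F g) c c'')"
      using int by (cases "c \<in> C \<and> c'' \<in> C") (auto simp: mm_def oint_def integral_sum) }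
  then show ?thesis by (simp add: fun_eq_iff oint_def)
qed

lemma mm_oint_right:
  assumes fC: "finite C" and int: "\<And>c c'. integrable M (\<lambda>g. F g c c')"
  shows "mm C (oint M F) K = oint M (\<lambda>g. mm C (F g) K)"
proof -
  { fix c c''
    have "mm C (oint M F) K c c'' = (LINT g|M. mm C (F g) K c c'')"
      using int by (cases "c \<in> C \<and> c'' \<in> C") (auto simp: mm_def oint_def integral_sum)
  }
  then show ?thesis by (simp add: fun_eq_iff oint_def)
qed

lemma oint_const: "prob_space M \<Longrightarrow> oint M (\<lambda>_. K) = K"
  by (simp add: oint_def fun_eq_iff prob_space.prob_space)

lemma adj_oint: "adj (oint M F) = oint M (\<lambda>g. adj (F g))"
  by (simp add: oint_def adj_def fun_eq_iff)

lemma zo_oint: "(\<And>g. zo C (F g)) \<Longrightarrow> zo C (oint M F)"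
  by (simp add: zo_def oint_def)

lemma oint_cong: "(\<And>g. F g = G g) \<Longrightarrow> oint M F = oint M G"
  by (simp add: oint_def)

context haarL begin

interpretation P: prob_space \<mu> by (rule prob)

lemma T_minus: "(\<lambda>x. - x) \<in> measurable \<mu> \<mu>"
  unfolding meas_iff2 by (rule borel_measurable_continuous_onI) (intro continuous_intros)

lemma oint_left: assumes "\<And>c c'. (\<lambda>g. F g c c') \<in> borel_measurable \<mu>" shows "oint \<mu> (\<lambda>g. F (h + g)) = oint \<mu> F"
  unfolding oint_def by (intro ext int_left assms)

lemma oint_right: assumes "\<And>c c'. (\<lambda>g. F g c c') \<in> borel_measurable \<mu>" shows "oint \<mu> (\<lambda>g. F (g + h)) = oint \<mu> F"
  unfolding oint_def by (intro ext int_right assms)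

end

locale grpfam = haarL \<mu> for \<mu> :: "'g::{topological_group_add, t2_space, second_countable_topology} measure" +
  fixes K :: "'c set" and W :: "'g \<Rightarrow> 'c mat"
  assumes fK: "finite K" and grpW: "grp K W" and bmW: "\<And>c c'. bm \<mu> (\<lambda>g. W g c c')"
begin

interpretation P: prob_space \<mu> by (rule prob)

lemma Whom: "mm K (W g) (W h) = W (g + h)" using grpW by (simp add: grp_def)
lemma W0: "W 0 = idm K" using grpW by (simp add: grp_def)
lemma Wadj: "adj (W g) = W (- g)" using grpW by (simp add: grp_def)
lemma zoW: "zo K (W g)" using grpW by (simp add: grp_def)

lemma Wint: "integrable \<mu> (\<lambda>g. W g c c')" using bmW bm_integrable prob by blast
lemma Wmeas: "(\<lambda>g. W g c c') \<in> borel_measurable \<mu>" using bmW by (simp add: bm_def)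

definition Pi :: "'c mat" where "Pi = oint \<mu> W"

lemma zoPi: "zo K Pi" unfolding Pi_def by (rule zo_oint[OF zoW])

lemma Pi_W: "mm K Pi (W h) = Pi"
proof -
  have "mm K Pi (W h) = oint \<mu> (\<lambda>g. W (g + h))"
    unfolding Pi_def by (simp add: mm_oint_right[OF fK Wint] Whom)
  also have "\<dots> = Pi" unfolding Pi_def by (rule oint_right[OF Wmeas])
  finally show ?thesis .
qed

lemma W_Pi: "mm K (W h) Pi = Pi"
proof -
  have "mm K (W h) Pi = oint \<mu> (\<lambda>g. W (h + g))"
    unfolding Pi_def by (simp add: mm_oint_left[OF fK Wint] Whom)
  also have "\<dots> = Pi" unfolding Pi_def by (rule oint_left[OF Wmeas])
  finally show ?thesis .
qed

lemma Pi_idem: "mm K Pi Pi = Pi"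
proof -
  have "mm K Pi Pi = oint \<mu> (\<lambda>g. mm K Pi (W g))" by (subst (2) Pi_def) (rule mm_oint_left[OF fK Wint])
  also have "\<dots> = Pi" by (simp add: Pi_W oint_const[OF prob])
  finally show ?thesis .
qed

lemma comm_Pi: "(\<And>g. mm K Y (W g) = mm K (W g) Y) \<Longrightarrow> mm K Y Pi = mm K Pi Y"
  unfolding Pi_def by (simp add: mm_oint_left[OF fK Wint] mm_oint_right[OF fK Wint])

lemma Wm_meas: "(\<lambda>g. W (- g) c c') \<in> borel_measurable \<mu>"
  using measurable_compose[OF T_minus Wmeas] by simp

lemma Wm_int: "integrable \<mu> (\<lambda>g. W (- g) c c')"
  using bm_integrable[OF prob bm_comp[OF bmW T_minus]] by simp

lemma Pi_herm: "adj Pi = Pi"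
proof -
  define Pi' where "Pi' = oint \<mu> (\<lambda>g. W (- g))"
  have "adj Pi = Pi'" unfolding Pi_def Pi'_def adj_oint by (simp add: Wadj)
  have WPi': "mm K (W h) Pi' = Pi'" for h
  proof -
    have "mm K (W h) Pi' = oint \<mu> (\<lambda>g. W (h + - g))"
      unfolding Pi'_def by (simp add: mm_oint_left[OF fK Wm_int] Whom)
    also have "\<dots> = oint \<mu> (\<lambda>g. W (h + - (g + h)))"
    proof (rule oint_right[symmetric])
      fix c c' show "(\<lambda>g. W (h + - g) c c') \<in> borel_measurable \<mu>"
        using measurable_compose[OF measurable_compose[OF T_minus T_left] Wmeas] by simp
    qed
    also have "\<dots> = Pi'"
    proof -
      have e: "h + - (g + h) = - g" for g by (simp only: minus_add add_minus_cancel)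
      show ?thesis unfolding Pi'_def by (simp only: e)
    qed
    finally show ?thesis .
  qed
  have "mm K Pi Pi' = oint \<mu> (\<lambda>g. mm K Pi (W (- g)))"
    unfolding Pi'_def by (simp add: mm_oint_left[OF fK Wm_int])
  also have "\<dots> = Pi" by (simp add: Pi_W oint_const[OF prob])
  finally have 1: "mm K Pi Pi' = Pi" .
  have "mm K Pi Pi' = oint \<mu> (\<lambda>g. mm K (W g) Pi')"
    unfolding Pi_def by (simp add: mm_oint_right[OF fK Wint])
  also have "\<dots> = Pi'" by (simp add: WPi' oint_const[OF prob])
  finally have "Pi = Pi'" using 1 by simp
  then show ?thesis using \<open>adj Pi = Pi'\<close> by simp
qed

definition twirl :: "'c mat \<Rightarrow> 'c mat" where
  "twirl Y = oint \<mu> (\<lambda>g. mm K (mm K (W g) Y) (W (- g)))"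

lemma tw_int: "integrable \<mu> (\<lambda>g. mm K (mm K (W g) Y) (W (- g)) c c')"
proof -
  have "bm \<mu> (\<lambda>g. mm K (mm K (W g) Y) (W (- g)) c c')"
    by (intro bm_mm fK bmW bm_comp[OF bmW T_minus] bm_const)
  then show ?thesis by (rule bm_integrable[OF prob])
qed

lemma tw_meas: "(\<lambda>g. mm K (mm K (W g) Y) (W (- g)) c c') \<in> borel_measurable \<mu>"
  using tw_int by (rule borel_measurable_integrable)

lemma bm_tw: "bm \<mu> (\<lambda>g. mm K (mm K (W g) Y) (W (- g)) c c')"
  by (intro bm_mm fK bmW bm_comp[OF bmW T_minus] bm_const)

lemma twirl_sandwich:
  assumes ZW: "\<And>g. mm K Z (W g) = Z" and WZ: "\<And>g. mm K (W g) Z = Z"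
  shows "mm K (mm K Z (twirl Y)) Z = mm K (mm K Z Y) Z"
proof -
  define F where "F = (\<lambda>g. mm K (mm K (W g) Y) (W (- g)))"
  have bF: "bm \<mu> (\<lambda>g. F g c c')" for c c' unfolding F_def by (rule bm_tw)
  have iZF: "integrable \<mu> (\<lambda>g. mm K Z (F g) c c')" for c c'
    by (rule bm_integrable[OF prob]) (intro bm_mm fK bF bm_const)
  have ZW': "mm K Z (mm K (W g) R) = mm K Z R" for g R by (simp add: ZW flip: mm_assoc[OF fK])
  have "mm K (mm K Z (twirl Y)) Z = mm K (oint \<mu> (\<lambda>g. mm K Z (F g))) Z"
    unfolding twirl_def F_def[symmetric] by (simp add: mm_oint_left[OF fK tw_int[unfolded F_def[symmetric]]] F_def)
  also have "\<dots> = oint \<mu> (\<lambda>g. mm K (mm K Z (F g)) Z)" by (rule mm_oint_right[OF fK iZF])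
  also have "\<dots> = oint \<mu> (\<lambda>g. mm K (mm K Z Y) Z)"
    by (rule oint_cong) (simp add: F_def mm_assoc[OF fK] WZ ZW')
  also have "\<dots> = mm K (mm K Z Y) Z" by (rule oint_const[OF prob])
  finally show ?thesis .
qed


lemma twirl_W: "mm K (W h) (twirl Y) = mm K (twirl Y) (W h)"
proof -
  define G where "G = (\<lambda>x. mm K (mm K (W x) Y) (W (- x + h)))"
  have Gm: "(\<lambda>g. G g c c') \<in> borel_measurable \<mu>" for c c'
  proof -
    have Tm: "(\<lambda>x. - x + h) \<in> measurable \<mu> \<mu>" using measurable_compose[OF T_minus T_right] by simp
    have "bm \<mu> (\<lambda>g. G g c c')" unfolding G_def
      by (intro bm_mm fK bmW bm_comp[OF bmW Tm] bm_const)
    then show ?thesis by (simp add: bm_def)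
  qed
  have "mm K (W h) (twirl Y) = oint \<mu> (\<lambda>g. mm K (W h) (mm K (mm K (W g) Y) (W (- g))))"
    unfolding twirl_def by (rule mm_oint_left[OF fK tw_int])
  also have "\<dots> = oint \<mu> (\<lambda>g. G (h + g))"
  proof (rule oint_cong)
    fix g
    have e: "- (h + g) + h = - g" by (simp only: minus_add add.assoc left_minus add_0_right)
    show "mm K (W h) (mm K (mm K (W g) Y) (W (- g))) = G (h + g)"
      unfolding G_def e by (simp add: Whom flip: mm_assoc[OF fK])
  qed
  also have "\<dots> = oint \<mu> G" by (rule oint_left[OF Gm])
  also have "\<dots> = oint \<mu> (\<lambda>g. mm K (mm K (mm K (W g) Y) (W (- g))) (W h))"
    by (rule oint_cong) (simp add: G_def mm_assoc[OF fK] Whom)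
  also have "\<dots> = mm K (twirl Y) (W h)"
    unfolding twirl_def by (rule mm_oint_right[OF fK tw_int, symmetric])
  finally show ?thesis .
qed

lemma twirl_comm:
  assumes YV: "mm K Y V = mm K V Y" and WV: "\<And>g. mm K (W g) V = mm K V (W g)"
  shows "mm K (twirl Y) V = mm K V (twirl Y)"
proof -
  have "mm K (twirl Y) V = oint \<mu> (\<lambda>g. mm K (mm K (mm K (W g) Y) (W (- g))) V)"
    unfolding twirl_def by (rule mm_oint_right[OF fK tw_int])
  also have "\<dots> = oint \<mu> (\<lambda>g. mm K V (mm K (mm K (W g) Y) (W (- g))))"
  proof (rule oint_cong)
    fix g
    have "mm K (mm K (mm K (W g) Y) (W (- g))) V = mm K (W g) (mm K Y (mm K (W (- g)) V))"
      by (simp only: mm_assoc[OF fK])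
    also have "\<dots> = mm K (W g) (mm K (mm K Y V) (W (- g)))" by (simp only: WV mm_assoc[OF fK])
    also have "\<dots> = mm K (mm K (W g) V) (mm K Y (W (- g)))" by (simp only: YV mm_assoc[OF fK])
    also have "\<dots> = mm K V (mm K (mm K (W g) Y) (W (- g)))" by (simp only: WV mm_assoc[OF fK])
    finally show "mm K (mm K (mm K (W g) Y) (W (- g))) V = mm K V (mm K (mm K (W g) Y) (W (- g)))" .
  qed
  also have "\<dots> = mm K V (twirl Y)"
    unfolding twirl_def by (rule mm_oint_left[OF fK tw_int, symmetric])
  finally show ?thesis .
qed

end


locale gauge = haarL \<mu> for \<mu> :: "'g::{topological_group_add, t2_space, second_countable_topology} measure" +
  fixes Vs :: "'v list" and E :: "'e set" and src tgt :: "'e \<Rightarrow> 'v" and d :: "'v \<Rightarrow> nat" and n :: "'e \<Rightarrow> nat"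
    and U :: "'v \<Rightarrow> 'g \<Rightarrow> nat \<Rightarrow> nat \<Rightarrow> complex" and \<phi> :: "'e \<Rightarrow> nat \<Rightarrow> 'g \<Rightarrow> complex"
  assumes finE: "finite E" and ends: "\<forall>e\<in>E. src e \<in> set Vs \<and> tgt e \<in> set Vs"
    and urep: "\<forall>v\<in>set Vs. unitary_rep (d v) (U v)" and l2: "\<forall>e\<in>E. L2_trunc_basis \<mu> (n e) (\<phi> e)"
begin

abbreviation S where "S \<equiv> sites (set Vs) E"
abbreviation D where "D \<equiv> site_dim d n"

lemma finS: "finite S" using finE by (simp add: sites_def)

lemma l2b_e: "e \<in> E \<Longrightarrow> l2b \<mu> (n e) (\<phi> e)"
  by (rule l2b.intro[OF haarL_axioms]) (simp add: l2b_axioms_def l2)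

definition sop :: "'v \<Rightarrow> 'g \<Rightarrow> ('v + 'e) \<Rightarrow> nat mat" where
  "sop v g x = (case x of Inl w \<Rightarrow> (if w = v then rst (d w) (U v g) else idm {..<d w})
     | Inr e \<Rightarrow> mm {..<n e} (l2b.LLf \<mu> (n e) (\<phi> e) (src e = v) g) (l2b.RRf \<mu> (n e) (\<phi> e) (tgt e = v) g))"

lemma D_simps[simp]: "D (Inl w) = d w" "D (Inr e) = n e"
  by (simp_all add: site_dim_def)

lemma grp_sop: assumes x: "x \<in> S" and v: "v \<in> set Vs" shows "grp {..<D x} (\<lambda>g. sop v g x)"
proof (cases x)
  case (Inl w)
  show ?thesis
  proof (cases "w = v")
    case True
    have "unitary_rep (d v) (U v)" using urep v by simp
    then show ?thesis using grp_U[of "d v" "U v"] Inl True by (simp add: sop_def)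
  next
    case False then show ?thesis using Inl grp_idm[of "{..<d w}"] by (simp add: sop_def)
  qed
next
  case (Inr e)
  then have e: "e \<in> E" using x by (auto simp: sites_def)
  interpret L: l2b \<mu> "n e" "\<phi> e" by (rule l2b_e[OF e])
  show ?thesis using Inr
    by (simp add: sop_def) (intro grp_prod L.grp_LL L.grp_RR L.LR_comm, simp)
qed

lemma comm_sop: assumes x: "x \<in> S" and vw: "v \<noteq> w"
  shows "mm {..<D x} (sop v g x) (sop w h x) = mm {..<D x} (sop w h x) (sop v g x)"
proof (cases x)
  case (Inl u)
  then show ?thesis using vw by (auto simp: sop_def mm_idm_left mm_idm_right)
next
  case (Inr e)
  then have e: "e \<in> E" using x by (auto simp: sites_def)
  interpret L: l2b \<mu> "n e" "\<phi> e" by (rule l2b_e[OF e])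
  show ?thesis using Inr vw
    by (simp add: sop_def) (rule comm4, auto intro: L.LL_comm L.RR_comm L.LR_comm L.LR_comm[symmetric])
qed

lemma bm_sop: assumes x: "x \<in> S" and v: "v \<in> set Vs" shows "bm \<mu> (\<lambda>g. sop v g x i j)"
proof (cases x)
  case (Inl w)
  show ?thesis
  proof (cases "w = v \<and> i < d w \<and> j < d w")
    case True
    have u: "unitary_rep (d v) (U v)" using urep v by simp
    have "bm \<mu> (\<lambda>g. U v g i j)" unfolding bm_def
      using True u Ubound[OF u] cont_meas[OF Ucont[OF u]] by auto
    moreover have "w = v" "i < d v" "j < d v" using True by auto
    ultimately show ?thesis using Inl by (simp add: sop_def rst_def)
  next
    case False
    then have "(\<lambda>g. sop v g x i j) = (\<lambda>g. idm {..<d w} i j)" using Inl by (auto simp: sop_def rst_def idm_def)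
    then show ?thesis by simp
  qed
next
  case (Inr e)
  then have e: "e \<in> E" using x by (auto simp: sites_def)
  interpret L: l2b \<mu> "n e" "\<phi> e" by (rule l2b_e[OF e])
  show ?thesis using Inr by (simp add: sop_def) (intro bm_mm L.bm_LL L.bm_RR, simp_all)
qed

lemma gauge_op_sop: "gauge_op (set Vs) E src tgt d n \<mu> U \<phi> v g = tensor S D (\<lambda>x. sop v g x)"
  unfolding gauge_op_def
proof (rule tensor_cong)
  fix x i j assume x: "x \<in> S" and ij: "i < D x" "j < D x"
  show "(case x of Inl w \<Rightarrow> if w = v then U v g i j else kdelta i j
      | Inr e \<Rightarrow> \<Sum>k<n e. (if src e = v then Lmat \<mu> (\<phi> e) g i k else kdelta i k) *
                          (if tgt e = v then Rinvmat \<mu> (\<phi> e) g k j else kdelta k j)) = sop v g x i j"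
  proof (cases x)
    case (Inl w) then show ?thesis using ij by (auto simp: sop_def rst_def idm_def kdelta_def)
  next
    case (Inr e)
    then have e: "e \<in> E" using x by (auto simp: sites_def)
    interpret L: l2b \<mu> "n e" "\<phi> e" by (rule l2b_e[OF e])
    show ?thesis using Inr ij by (simp add: sop_def L.LLf_def L.RRf_def mm_rst) (simp add: rst_def)
  qed
qed


definition AT :: "('v + 'e) set \<Rightarrow> 'v \<Rightarrow> 'g \<Rightarrow> ('v + 'e) cfg mat" where
  "AT T v g = tensor T D (\<lambda>x. sop v g x)"

lemma sop_entry_mm:
  assumes x: "x \<in> S" and ij: "i < D x" "j < D x"
  shows "(\<Sum>k<D x. A i k * B k j) = mm {..<D x} A B i j"
  using ij by (simp add: mm_def)

lemma grp_AT: assumes T: "T \<subseteq> S" and v: "v \<in> set Vs" shows "grp (confs T D) (AT T v)"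
proof -
  have fT: "finite T" using finS T by (rule finite_subset[rotated])
  have G: "grp {..<D x} (\<lambda>g. sop v g x)" if "x \<in> T" for x using grp_sop that T v by auto
  have "mm (confs T D) (AT T v g) (AT T v h) = AT T v (g + h)" for g h
    unfolding AT_def tensor_mult[OF fT]
  proof (rule tensor_cong)
    fix x i j assume x: "x \<in> T" and ij: "i < D x" "j < D x"
    have "(\<Sum>k<D x. sop v g x i k * sop v h x k j) = mm {..<D x} (sop v g x) (sop v h x) i j"
      using ij by (simp add: mm_def)
    also have "\<dots> = sop v (g + h) x i j" using G[OF x] by (simp add: grp_def)
    finally show "(\<Sum>k<D x. sop v g x i k * sop v h x k j) = sop v (g + h) x i j" .
  qed
  moreover have "AT T v 0 = idm (confs T D)"
  proof -
    have "AT T v 0 = tensor T D (\<lambda>_. kdelta)"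
      unfolding AT_def by (rule tensor_cong) (use G in \<open>auto simp: grp_def idm_def kdelta_def\<close>)
    then show ?thesis by (simp add: tensor_kdelta[OF fT])
  qed
  moreover have "adj (AT T v g) = AT T v (- g)" for g
    unfolding AT_def tensor_adj
  proof (rule tensor_cong)
    fix x i j assume x: "x \<in> T" and ij: "i < D x" "j < D x"
    have "cnj (sop v g x j i) = adj (sop v g x) i j" by (simp add: adj_def)
    also have "\<dots> = sop v (- g) x i j" using G[OF x] by (simp add: grp_def)
    finally show "cnj (sop v g x j i) = sop v (- g) x i j" .
  qed
  ultimately show ?thesis by (simp add: grp_def AT_def)
qed

lemma comm_AT: assumes T: "T \<subseteq> S" and vw: "v \<noteq> w"
  shows "mm (confs T D) (AT T v g) (AT T w h) = mm (confs T D) (AT T w h) (AT T v g)"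
proof -
  have fT: "finite T" using finS T by (rule finite_subset[rotated])
  show ?thesis unfolding AT_def tensor_mult[OF fT]
  proof (rule tensor_cong)
    fix x i j assume x: "x \<in> T" and ij: "i < D x" "j < D x"
    have "(\<Sum>k<D x. sop v g x i k * sop w h x k j) = mm {..<D x} (sop v g x) (sop w h x) i j"
      using ij by (simp add: mm_def)
    also have "\<dots> = mm {..<D x} (sop w h x) (sop v g x) i j" using comm_sop[OF _ vw] x T by auto
    also have "\<dots> = (\<Sum>k<D x. sop w h x i k * sop v g x k j)" using ij by (simp add: mm_def)
    finally show "(\<Sum>k<D x. sop v g x i k * sop w h x k j) = (\<Sum>k<D x. sop w h x i k * sop v g x k j)" .
  qed
qed

lemma bm_AT: assumes T: "T \<subseteq> S" and v: "v \<in> set Vs" shows "bm \<mu> (\<lambda>g. AT T v g c c')"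
  unfolding AT_def tensor_def using T v by (intro bm_if bm_prod bm_sop) auto

end


context gauge begin

abbreviation CC where "CC \<equiv> confs S D"

lemma finCC: "finite CC" using finS by (simp add: confs_def finite_PiE)

lemma grpfam_v: "v \<in> set Vs \<Longrightarrow> grpfam \<mu> CC (AT S v)"
  by (rule grpfam.intro[OF haarL_axioms]) (simp add: grpfam_axioms_def finCC grp_AT bm_AT)

definition Pv :: "'v \<Rightarrow> ('v + 'e) cfg mat" where "Pv v = oint \<mu> (AT S v)"

lemma gauge_proj_Pv: "gauge_proj (set Vs) E src tgt d n \<mu> U \<phi> v = Pv v"
  by (simp add: gauge_proj_def Pv_def oint_def gauge_op_sop AT_def)

lemma zoPv: "v \<in> set Vs \<Longrightarrow> zo CC (Pv v)"
proof -
  assume v: "v \<in> set Vs"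
  interpret G: grpfam \<mu> CC "AT S v" by (rule grpfam_v[OF v])
  show ?thesis using G.zoPi by (simp add: G.Pi_def Pv_def)
qed

lemma Pv_props:
  assumes v: "v \<in> set Vs"
  shows "mm CC (Pv v) (AT S v h) = Pv v" "mm CC (AT S v h) (Pv v) = Pv v"
    "mm CC (Pv v) (Pv v) = Pv v" "adj (Pv v) = Pv v"
proof -
  interpret G: grpfam \<mu> CC "AT S v" by (rule grpfam_v[OF v])
  show "mm CC (Pv v) (AT S v h) = Pv v" "mm CC (AT S v h) (Pv v) = Pv v"
    "mm CC (Pv v) (Pv v) = Pv v" "adj (Pv v) = Pv v"
    using G.Pi_W G.W_Pi G.Pi_idem G.Pi_herm by (simp_all add: G.Pi_def Pv_def)
qed

lemma comm_Pv:
  assumes v: "v \<in> set Vs" and c: "\<And>g. mm CC Y (AT S v g) = mm CC (AT S v g) Y"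
  shows "mm CC Y (Pv v) = mm CC (Pv v) Y"
proof -
  interpret G: grpfam \<mu> CC "AT S v" by (rule grpfam_v[OF v])
  show ?thesis using G.comm_Pi[OF c] by (simp add: G.Pi_def Pv_def)
qed

lemma cross1: "v \<in> set Vs \<Longrightarrow> w \<noteq> v \<Longrightarrow> mm CC (AT S w h) (Pv v) = mm CC (Pv v) (AT S w h)"
  by (rule comm_Pv) (auto simp: comm_AT)

lemma cross2: "v \<in> set Vs \<Longrightarrow> w \<in> set Vs \<Longrightarrow> mm CC (Pv w) (Pv v) = mm CC (Pv v) (Pv w)"
proof (cases "v = w")
  case False
  assume v: "v \<in> set Vs" and w: "w \<in> set Vs"
  show ?thesis
  proof (rule comm_Pv[OF v])
    fix g show "mm CC (Pv w) (AT S v g) = mm CC (AT S v g) (Pv w)"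
      using cross1[OF w, of v g] False by simp
  qed
qed simp

definition F :: "'v list \<Rightarrow> ('v + 'e) cfg mat" where
  "F ws = foldr (mm CC) (map Pv ws) (idm CC)"

lemma F_simps: "F [] = idm CC" "F (u # us) = mm CC (Pv u) (F us)"
  by (simp_all add: F_def)

lemma zoF: "zo CC (F ws)"
  by (cases ws) (simp_all add: F_simps)

lemma F_comm:
  assumes zY: "zo CC Y" and c: "\<And>v. v \<in> set ws \<Longrightarrow> mm CC Y (Pv v) = mm CC (Pv v) Y"
  shows "mm CC Y (F ws) = mm CC (F ws) Y"
  using c
proof (induction ws)
  case Nil then show ?case using zY by (simp add: F_simps mm_idm_left mm_idm_right finCC)
next
  case (Cons u us)
  have "mm CC Y (F (u # us)) = mm CC (Pv u) (mm CC Y (F us))"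
    using Cons.prems by (simp add: F_simps mm_assoc[OF finCC] flip: mm_assoc[OF finCC])
  also have "\<dots> = mm CC (F (u # us)) Y" using Cons by (simp add: F_simps mm_assoc[OF finCC])
  finally show ?case .
qed

lemma F_AT:
  assumes ws: "set ws \<subseteq> set Vs" and v: "v \<in> set ws"
  shows "mm CC (AT S v h) (F ws) = F ws \<and> mm CC (F ws) (AT S v h) = F ws"
  using ws v
proof (induction ws)
  case Nil then show ?case by simp
next
  case (Cons u us)
  have u: "u \<in> set Vs" using Cons.prems by auto
  have left: "mm CC (AT S v h) (F (u # us)) = F (u # us)"
  proof (cases "u = v")
    case True
    then show ?thesis using Pv_props(2)[OF u] by (simp add: F_simps flip: mm_assoc[OF finCC])
  next
    case False
    then have vus: "v \<in> set us" using Cons.prems by auto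
    have "mm CC (AT S v h) (F (u # us)) = mm CC (Pv u) (mm CC (AT S v h) (F us))"
      using cross1[OF u, of v h] False by (simp add: F_simps flip: mm_assoc[OF finCC])
    then show ?thesis using Cons.IH[OF _ vus] Cons.prems by (simp add: F_simps)
  qed
  have right: "mm CC (F (u # us)) (AT S v h) = F (u # us)"
  proof (cases "v \<in> set us")
    case True
    then show ?thesis using Cons.IH[OF _ True] Cons.prems by (simp add: F_simps mm_assoc[OF finCC])
  next
    case False
    then have uv: "u = v" using Cons.prems by auto
    have "mm CC (AT S v h) (F us) = mm CC (F us) (AT S v h)"
    proof (rule F_comm)
      show "zo CC (AT S v h)" by (simp add: AT_def)
      fix w assume "w \<in> set us"
      then have "w \<noteq> v" "w \<in> set Vs" using False Cons.prems by auto
      then show "mm CC (AT S v h) (Pv w) = mm CC (Pv w) (AT S v h)" using cross1 by auto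
    qed
    note c = this
    have "mm CC (F (u # us)) (AT S v h) = mm CC (Pv v) (mm CC (F us) (AT S v h))"
      using uv by (simp add: F_simps mm_assoc[OF finCC])
    also have "\<dots> = mm CC (mm CC (Pv v) (AT S v h)) (F us)" by (simp add: c mm_assoc[OF finCC])
    also have "\<dots> = F (u # us)" using Pv_props(1)[OF u] uv by (simp add: F_simps)
    finally show ?thesis .
  qed
  show ?case using left right by simp
qed

lemma F_Pv:
  assumes ws: "set ws \<subseteq> set Vs" and v: "v \<in> set ws"
  shows "mm CC (F ws) (Pv v) = F ws"
proof -
  have vV: "v \<in> set Vs" using ws v by auto
  interpret G: grpfam \<mu> CC "AT S v" by (rule grpfam_v[OF vV])
  have "mm CC (F ws) (Pv v) = oint \<mu> (\<lambda>g. mm CC (F ws) (AT S v g))"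
    unfolding Pv_def by (rule mm_oint_left[OF finCC G.Wint])
  also have "\<dots> = F ws" using F_AT[OF ws v] oint_const[OF prob] by simp
  finally show ?thesis .
qed

lemma F_idem:
  assumes ws: "set ws \<subseteq> set Vs"
  shows "mm CC (F Vs) (F ws) = F Vs"
  using ws
proof (induction ws)
  case Nil then show ?case by (simp add: F_simps mm_idm_right zoF finCC)
next
  case (Cons u us)
  have "mm CC (F Vs) (F (u # us)) = mm CC (mm CC (F Vs) (Pv u)) (F us)"
    by (simp add: F_simps mm_assoc[OF finCC])
  also have "\<dots> = F Vs" using Cons F_Pv[of Vs u] by simp
  finally show ?case .
qed

lemma F_herm:
  assumes ws: "set ws \<subseteq> set Vs"
  shows "adj (F ws) = F ws"
  using ws
proof (induction ws)
  case Nil then show ?case by (simp add: F_simps)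
next
  case (Cons u us)
  have u: "u \<in> set Vs" using Cons.prems by auto
  have "adj (F (u # us)) = mm CC (F us) (Pv u)"
    using Cons Pv_props(4)[OF u] by (simp add: F_simps adj_mm)
  also have "\<dots> = mm CC (Pv u) (F us)"
  proof -
    have "mm CC (Pv u) (F us) = mm CC (F us) (Pv u)"
    proof (rule F_comm)
      show "zo CC (Pv u)" by (rule zoPv[OF u])
      fix w assume "w \<in> set us"
      then show "mm CC (Pv u) (Pv w) = mm CC (Pv w) (Pv u)" using cross2 Cons.prems u by auto
    qed
    then show ?thesis by simp
  qed
  finally show ?case by (simp add: F_simps)
qed

lemma gauge_proj_Pv': "gauge_proj (set Vs) E src tgt d n \<mu> U \<phi> = Pv"
  by (rule ext) (rule gauge_proj_Pv)

lemma PiGI_F: "PiGI Vs E src tgt d n \<mu> U \<phi> = F Vs"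
  by (simp add: PiGI_def F_def opmul_mm gauge_proj_Pv' opid_def tensor_kdelta[OF finS])

end


context bip begin

lemma oint_prodop1: "oint M (\<lambda>g. prodop (F g) V) = prodop (oint M F) V"
  by (auto simp: oint_def prodop_def fun_eq_iff)

end

locale gauge_r = gauge \<mu> Vs E src tgt d n U \<phi>
  for \<mu> :: "'g::{topological_group_add, t2_space, second_countable_topology} measure"
  and Vs :: "'v list" and E :: "'e set" and src tgt d n U \<phi> +
  fixes r :: "('v + 'e) set"
  assumes rS: "r \<subseteq> sites (set Vs) E"
begin

sublocale B: bip CC "confs r D" "confs (S - r) D" "\<lambda>c. restrict c r" "\<lambda>c. restrict c (S - r)" "merge r"
  by (rule bip_confs[OF finS rS])

lemma AT_split: "AT S v g = B.prodop (AT r v g) (AT (S - r) v g)"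
  unfolding AT_def by (rule tensor_split[OF finS rS])

lemma grp_r: "v \<in> set Vs \<Longrightarrow> grp (confs r D) (AT r v)" using grp_AT rS by blast
lemma grp_b: "v \<in> set Vs \<Longrightarrow> grp (confs (S - r) D) (AT (S - r) v)" using grp_AT by blast

abbreviation P where "P \<equiv> F Vs"

lemma Rcomm: "mm CC (B.loc2 (B.tr1 P)) P = mm CC P (B.loc2 (B.tr1 P))"
proof -
  define R where "R = B.tr1 P"
  have Rv: "mm CC (B.loc2 R) (Pv v) = mm CC (Pv v) (B.loc2 R)" if v: "v \<in> set Vs" for v
  proof (rule comm_Pv[OF v])
    fix g
    let ?Wr = "AT r v" and ?Wb = "AT (S - r) v"
    have gr: "grp (confs r D) ?Wr" and gb: "grp (confs (S - r) D) ?Wb" using grp_r grp_b v by auto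
    have PP: "P = mm CC (mm CC (AT S v g) P) (AT S v (- g))"
      using F_AT[of Vs v] v by simp
    have inv: "(\<Sum>a''\<in>confs r D. ?Wr (- g) a a'' * ?Wr g a'' a') = idm (confs r D) a a'"
      if "a \<in> confs r D" "a' \<in> confs r D" for a a'
    proof -
      have "mm (confs r D) (?Wr (- g)) (?Wr g) = idm (confs r D)" using gr by (simp add: grp_def)
      then have "mm (confs r D) (?Wr (- g)) (?Wr g) a a' = idm (confs r D) a a'" by simp
      then show ?thesis using that by (simp add: mm_def)
    qed
    have "R = B.tr1 (mm CC (mm CC (B.prodop (?Wr g) (?Wb g)) P) (B.prodop (?Wr (- g)) (?Wb (- g))))"
      unfolding R_def AT_split[symmetric] using PP by simp
    also have "\<dots> = mm (confs (S - r) D) (mm (confs (S - r) D) (?Wb g) R) (?Wb (- g))"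
      unfolding R_def by (rule B.tr1_conj[OF inv])
    finally have Req: "R = mm (confs (S - r) D) (mm (confs (S - r) D) (?Wb g) R) (?Wb (- g))" .
    have RW: "mm (confs (S - r) D) R (?Wb g) = mm (confs (S - r) D) (?Wb g) R"
    proof -
      have "mm (confs (S - r) D) R (?Wb g) = mm (confs (S - r) D) (mm (confs (S - r) D) (?Wb g) R) (mm (confs (S - r) D) (?Wb (- g)) (?Wb g))"
        by (subst Req) (simp add: mm_assoc[OF B.finBb])
      also have "\<dots> = mm (confs (S - r) D) (?Wb g) R"
        using gb by (simp add: grp_def mm_idm_right[OF zo_mm B.finBb])
      finally show ?thesis .
    qed
    show "mm CC (B.loc2 R) (AT S v g) = mm CC (AT S v g) (B.loc2 R)"
      unfolding AT_split B.loc2_def B.mm_prodop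
      by (rule B.prodop_cong) (simp_all add: mm_idm_on_left mm_idm_on_right B.finAr RW)
  qed
  have "mm CC (B.loc2 R) P = mm CC P (B.loc2 R)"
    by (rule F_comm) (simp_all add: Rv)
  then show ?thesis by (simp add: R_def)
qed


lemma twirl_loc1:
  assumes v: "v \<in> set Vs"
  shows "grpfam.twirl \<mu> CC (AT S v) (B.loc1 M) = B.loc1 (oint \<mu> (\<lambda>g. mm (confs r D) (mm (confs r D) (AT r v g) M) (AT r v (- g))))"
proof -
  interpret G: grpfam \<mu> CC "AT S v" by (rule grpfam_v[OF v])
  have gb: "grp (confs (S - r) D) (AT (S - r) v)" using grp_b v by auto
  have "mm CC (mm CC (AT S v g) (B.loc1 M)) (AT S v (- g)) = B.loc1 (mm (confs r D) (mm (confs r D) (AT r v g) M) (AT r v (- g)))" for g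
  proof -
    have "mm (confs (S - r) D) (mm (confs (S - r) D) (AT (S - r) v g) (idm (confs (S - r) D))) (AT (S - r) v (- g)) = idm (confs (S - r) D)"
      using gb by (simp add: grp_def mm_idm_right B.finBb)
    then show ?thesis unfolding AT_split B.loc1_def B.mm_prodop by simp
  qed
  then show ?thesis unfolding G.twirl_def B.loc1_def by (simp add: B.oint_prodop1)
qed

definition TW :: "'v list \<Rightarrow> ('v + 'e) cfg mat \<Rightarrow> ('v + 'e) cfg mat" where
  "TW ws Y = foldr (\<lambda>v. grpfam.twirl \<mu> CC (AT S v)) ws Y"

lemma TW_simps: "TW [] Y = Y" "TW (u # us) Y = grpfam.twirl \<mu> CC (AT S u) (TW us Y)"
  by (simp_all add: TW_def)

lemma TW_loc1: "set ws \<subseteq> set Vs \<Longrightarrow> \<exists>M'. TW ws (B.loc1 M) = B.loc1 M'"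
proof (induction ws)
  case Nil then show ?case by (auto simp: TW_simps)
next
  case (Cons u us)
  have "set us \<subseteq> set Vs" using Cons.prems by simp
  then obtain M1 where h1: "TW us (B.loc1 M) = B.loc1 M1" using Cons.IH by blast
  have u: "u \<in> set Vs" using Cons.prems by simp
  have "TW (u # us) (B.loc1 M) = B.loc1 (oint \<mu> (\<lambda>g. mm (confs r D) (mm (confs r D) (AT r u g) M1) (AT r u (- g))))"
    unfolding TW_simps h1 by (rule twirl_loc1[OF u])
  then show ?case by blast
qed

lemma TW_sandwich: "set ws \<subseteq> set Vs \<Longrightarrow> mm CC (mm CC P (TW ws Y)) P = mm CC (mm CC P Y) P"
proof (induction ws)
  case Nil then show ?case by (simp add: TW_simps)
next
  case (Cons u us)
  have u: "u \<in> set Vs" using Cons.prems by auto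
  interpret G: grpfam \<mu> CC "AT S u" by (rule grpfam_v[OF u])
  have "mm CC (mm CC P (TW (u # us) Y)) P = mm CC (mm CC P (TW us Y)) P"
    unfolding TW_simps by (rule G.twirl_sandwich) (use F_AT[of Vs u] u in auto)
  then show ?case using Cons by simp
qed

lemma TW_comm: "set ws \<subseteq> set Vs \<Longrightarrow> v \<in> set ws \<Longrightarrow> mm CC (TW ws Y) (AT S v h) = mm CC (AT S v h) (TW ws Y)"
proof (induction ws)
  case Nil then show ?case by simp
next
  case (Cons u us)
  have u: "u \<in> set Vs" using Cons.prems by auto
  interpret G: grpfam \<mu> CC "AT S u" by (rule grpfam_v[OF u])
  show ?case
  proof (cases "v = u")
    case True
    then show ?thesis using G.twirl_W[of h "TW us Y"] by (simp add: TW_simps)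
  next
    case False
    then have vus: "v \<in> set us" using Cons.prems by auto
    show ?thesis unfolding TW_simps
      by (rule G.twirl_comm) (use Cons.IH[OF _ vus] Cons.prems False comm_AT in auto)
  qed
qed

lemma twirl_exists:
  "\<exists>M'. mm CC (B.loc1 M') P = mm CC P (B.loc1 M') \<and> mm CC (mm CC P (B.loc1 M)) P = mm CC (mm CC P (B.loc1 M')) P"
proof -
  obtain M' where M': "TW Vs (B.loc1 M) = B.loc1 M'" using TW_loc1[of Vs M] by auto
  have "mm CC (B.loc1 M') P = mm CC P (B.loc1 M')"
  proof (rule F_comm)
    fix v assume v: "v \<in> set Vs"
    show "mm CC (B.loc1 M') (Pv v) = mm CC (Pv v) (B.loc1 M')"
      by (rule comm_Pv[OF v]) (use TW_comm[of Vs v "B.loc1 M"] M' v in auto)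
  qed simp
  moreover have "mm CC (mm CC P (B.loc1 M)) P = mm CC (mm CC P (B.loc1 M')) P"
    using TW_sandwich[of Vs "B.loc1 M"] M' by simp
  ultimately show ?thesis by blast
qed


lemma local_r: "local_alg S D r = range B.loc1"
proof -
  have "B.loc1 Bm = (\<lambda>c c'. if c \<in> CC \<and> c' \<in> CC
       then Bm (restrict c r) (restrict c' r) * (if restrict c (S - r) = restrict c' (S - r) then 1 else 0) else 0)" for Bm
    by (auto simp: B.loc1_def B.prodop_def idm_def fun_eq_iff B.q_in)
  then show ?thesis by (auto simp: local_alg_def)
qed

lemma local_rbar: "local_alg S D (S - r) = range B.loc2"
proof -
  have Sr: "S - (S - r) = r" using rS by auto
  have "B.loc2 Bm = (\<lambda>c c'. if c \<in> CC \<and> c' \<in> CC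
       then Bm (restrict c (S - r)) (restrict c' (S - r)) * (if restrict c (S - (S - r)) = restrict c' (S - (S - r)) then 1 else 0) else 0)" for Bm
    unfolding Sr by (auto simp: B.loc2_def B.prodop_def idm_def fun_eq_iff B.p_in)
  then show ?thesis by (auto simp: local_alg_def)
qed

lemma full_zo: "full_alg S D = {X. zo CC X}"
  by (simp add: full_alg_def zo_def)

lemma compress_mm: "compress S D Q A = (\<lambda>X. mm CC (mm CC Q X) Q) ` A"
  by (simp add: compress_def opmul_mm)

lemma main:
  "{X \<in> (\<lambda>X. mm CC (mm CC P X) P) ` {X. zo CC X}. \<forall>Y \<in> (\<lambda>X. mm CC (mm CC P X) P) ` range B.loc1. mm CC X Y = mm CC Y X}
   = (\<lambda>X. mm CC (mm CC P X) P) ` range B.loc2"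
proof
  have zP: "zo CC P" by (rule zoF)
  have Pidem: "mm CC P P = P" using F_idem[of Vs] by simp
  have Pherm: "adj P = P" using F_herm[of Vs] by simp
  show "{X \<in> (\<lambda>X. mm CC (mm CC P X) P) ` {X. zo CC X}. \<forall>Y \<in> (\<lambda>X. mm CC (mm CC P X) P) ` range B.loc1. mm CC X Y = mm CC Y X}
   \<subseteq> (\<lambda>X. mm CC (mm CC P X) P) ` range B.loc2"
  proof
    fix X assume X: "X \<in> {X \<in> (\<lambda>X. mm CC (mm CC P X) P) ` {X. zo CC X}. \<forall>Y \<in> (\<lambda>X. mm CC (mm CC P X) P) ` range B.loc1. mm CC X Y = mm CC Y X}"
    then obtain X0 where X0: "X = mm CC (mm CC P X0) P" by auto
    have XP: "mm CC X P = X" using X0 Pidem by (simp add: mm_assoc[OF finCC])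
    have PX: "mm CC P X = X" using X0 Pidem by (simp flip: mm_assoc[OF finCC])
    have comm: "mm CC X (mm CC (mm CC P (B.loc1 M)) P) = mm CC (mm CC (mm CC P (B.loc1 M)) P) X" for M
      using X by auto
    obtain N where "X = mm CC (mm CC P (B.loc2 N)) P"
      using B.haag_core[OF zP Pidem Pherm Rcomm _ XP PX comm] X0 by auto
    then show "X \<in> (\<lambda>X. mm CC (mm CC P X) P) ` range B.loc2" by auto
  qed
  show "(\<lambda>X. mm CC (mm CC P X) P) ` range B.loc2 \<subseteq>
    {X \<in> (\<lambda>X. mm CC (mm CC P X) P) ` {X. zo CC X}. \<forall>Y \<in> (\<lambda>X. mm CC (mm CC P X) P) ` range B.loc1. mm CC X Y = mm CC Y X}"
  proof
    fix X assume "X \<in> (\<lambda>X. mm CC (mm CC P X) P) ` range B.loc2"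
    then obtain N where XN: "X = mm CC (mm CC P (B.loc2 N)) P" by auto
    have "\<forall>Y \<in> (\<lambda>X. mm CC (mm CC P X) P) ` range B.loc1. mm CC X Y = mm CC Y X"
    proof
      fix Y assume "Y \<in> (\<lambda>X. mm CC (mm CC P X) P) ` range B.loc1"
      then obtain M where YM: "Y = mm CC (mm CC P (B.loc1 M)) P" by auto
      obtain M' where M': "mm CC (B.loc1 M') P = mm CC P (B.loc1 M')"
          "mm CC (mm CC P (B.loc1 M)) P = mm CC (mm CC P (B.loc1 M')) P"
        using twirl_exists[of M] by blast
      show "mm CC X Y = mm CC Y X" unfolding XN YM by (rule B.core2[OF zP Pidem M'])
    qed
    moreover have "X \<in> (\<lambda>X. mm CC (mm CC P X) P) ` {X. zo CC X}" using XN by auto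
    ultimately show "X \<in> {X \<in> (\<lambda>X. mm CC (mm CC P X) P) ` {X. zo CC X}. \<forall>Y \<in> (\<lambda>X. mm CC (mm CC P X) P) ` range B.loc1. mm CC X Y = mm CC Y X}"
      by blast
  qed
qed

end


theorem corollary7:
  fixes Vs :: "'v list" and E :: "'e set" and src tgt :: "'e \<Rightarrow> 'v"
    and \<mu> :: "'g::{topological_group_add, t2_space, second_countable_topology} measure"
    and d :: "'v \<Rightarrow> nat" and U :: "'v \<Rightarrow> 'g \<Rightarrow> nat \<Rightarrow> nat \<Rightarrow> complex"
    and n :: "'e \<Rightarrow> nat" and \<phi> :: "'e \<Rightarrow> nat \<Rightarrow> 'g \<Rightarrow> complex"
    and r :: "('v + 'e) set"
  assumes "compact (UNIV :: 'g set)"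
    and "haar_measure \<mu>"
    and "distinct Vs" and "finite E"
    and "\<forall>e\<in>E. src e \<in> set Vs \<and> tgt e \<in> set Vs"
    and "\<forall>v\<in>set Vs. unitary_rep (d v) (U v)"
    and "\<forall>e\<in>E. L2_trunc_basis \<mu> (n e) (\<phi> e)"
    and "r \<subseteq> sites (set Vs) E"
  shows
    "(let S = sites (set Vs) E; D = site_dim d n;
          P = PiGI Vs E src tgt d n \<mu> U \<phi>;
          Ar = compress S D P (local_alg S D r);
          Arbar = compress S D P (local_alg S D (S - r));
          A = compress S D P (full_alg S D)
      in {X \<in> A. \<forall>Y \<in> Ar. opmul S D X Y = opmul S D Y X} = Arbar)"
proof -
  interpret G: gauge_r \<mu> Vs E src tgt d n U \<phi> r
  proof (intro gauge_r.intro gauge.intro haarL.intro gauge_axioms.intro gauge_r_axioms.intro)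
  qed (use assms in auto)
  show ?thesis
    unfolding Let_def G.PiGI_F opmul_mm G.local_r G.local_rbar G.full_zo G.compress_mm
    by (rule G.main)
qed


end
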